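(* Let $G\in\mathcal{U}$ and $v\in V(G)$. Let $e$ be an old edge of $G^v$, let $f$ be a new edge of $G^v$ and $f'$ its opposite edge. Then: (i) $e$ is lonely in $G^v$ if and only if $e$ is lonely in $G$ and no $v$-join of $G$ contains $e$. Moreover, $f'$ is not lonely in $G^v$. (ii) $f$ is lonely in $G^v$ if and only if $f'$ is lonely in $G$.
   Context: In a bridgeless cubic graph, an edge is lonely if it belongs to exactly one perfect matching. $\mathcal{U}$ denotes the class of 3-connected cubic graphs having at least one lonely edge. For a cubic graph $G$ and $v\in V(G)$ with neighbours $x_1,x_2,x_3$, $G^v$ denotes the cubic graph obtained by replacing $v$ by a triangle: delete $v$, add new vertices $v_1,v_2,v_3$, the edges $v_1v_2,v_2v_3,v_3v_1$ (the new edges), and the edges $v_ix_i$ for $i=1,2,3$. All other edges of $G^v$ (including $v_1x_1,v_2x_2,v_3x_3$) are old edges and are identified with the corresponding edges of $G$ (the edge $v_ix_i$ of $G^v$ is identified with $vx_i$ of $G$). For pairwise distinct $i,j,k\in\{1,2,3\}$, the edge $v_ix_i$ is called opposite to the new edge $v_jv_k$. For $v\in V(G)$, a $v$-join of $G$ is a spanning subgraph in which $v$ has degree $3$ and every other vertex has degree $1$. *)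

theory Defs
  imports Main
begin

definition graph :: "'a set \<Rightarrow> 'a set set \<Rightarrow> bool" where
  "graph V E \<longleftrightarrow> finite V \<and> (\<forall>e\<in>E. \<exists>a b. e = {a, b} \<and> a \<noteq> b \<and> a \<in> V \<and> b \<in> V)"

definition degree :: "'a set set \<Rightarrow> 'a \<Rightarrow> nat" where
  "degree F u = card {e \<in> F. u \<in> e}"

definition neighbours :: "'a set set \<Rightarrow> 'a \<Rightarrow> 'a set" where
  "neighbours E u = {w. {u, w} \<in> E}"

definition cubic :: "'a set \<Rightarrow> 'a set set \<Rightarrow> bool" where
  "cubic V E \<longleftrightarrow> graph V E \<and> (\<forall>u\<in>V. degree E u = 3)"

definition connected_on :: "'a set \<Rightarrow> 'a set set \<Rightarrow> bool" where
  "connected_on W E \<longleftrightarrow>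
     (\<forall>u\<in>W. \<forall>w\<in>W. (\<lambda>a b. a \<in> W \<and> b \<in> W \<and> {a, b} \<in> E)\<^sup>*\<^sup>* u w)"

definition three_connected :: "'a set \<Rightarrow> 'a set set \<Rightarrow> bool" where
  "three_connected V E \<longleftrightarrow> card V \<ge> 4 \<and>
     (\<forall>S. S \<subseteq> V \<and> card S \<le> 2 \<longrightarrow> connected_on (V - S) E)"

definition perfect_matching :: "'a set \<Rightarrow> 'a set set \<Rightarrow> 'a set set \<Rightarrow> bool" where
  "perfect_matching V E M \<longleftrightarrow> M \<subseteq> E \<and> (\<forall>u\<in>V. \<exists>!e. e \<in> M \<and> u \<in> e)"

definition lonely :: "'a set \<Rightarrow> 'a set set \<Rightarrow> 'a set \<Rightarrow> bool" where
  "lonely V E e \<longleftrightarrow> e \<in> E \<and> card {M. perfect_matching V E M \<and> e \<in> M} = 1"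

definition classU :: "'a set \<Rightarrow> 'a set set \<Rightarrow> bool" where
  "classU V E \<longleftrightarrow> cubic V E \<and> three_connected V E \<and> (\<exists>e\<in>E. lonely V E e)"

definition vjoin :: "'a set \<Rightarrow> 'a set set \<Rightarrow> 'a \<Rightarrow> 'a set set \<Rightarrow> bool" where
  "vjoin V E v J \<longleftrightarrow> J \<subseteq> E \<and> degree J v = 3 \<and> (\<forall>u\<in>V - {v}. degree J u = 1)"

text \<open>The graph G^v on vertex type 'a + 'a: old vertices are Inl u (u \<noteq> v);
  the new vertex v_i adjacent to neighbour x_i of v is named Inr x_i.\<close>
definition tri_vertices :: "'a set \<Rightarrow> 'a set set \<Rightarrow> 'a \<Rightarrow> ('a + 'a) set" where
  "tri_vertices V E v = Inl ` (V - {v}) \<union> Inr ` neighbours E v"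

text \<open>Identification of edges of G with old edges of G^v.\<close>
definition old_edge :: "'a \<Rightarrow> 'a set \<Rightarrow> ('a + 'a) set" where
  "old_edge v e = (if v \<in> e then (\<Union>x\<in>e - {v}. {Inr x, Inl x}) else Inl ` e)"

definition tri_edges :: "'a set \<Rightarrow> 'a set set \<Rightarrow> 'a \<Rightarrow> ('a + 'a) set set" where
  "tri_edges V E v = old_edge v ` E \<union>
     {{Inr y, Inr z} | y z. y \<in> neighbours E v \<and> z \<in> neighbours E v \<and> y \<noteq> z}"

end

theory Submission
  imports Defs
begin


definition reach :: "'a set \<Rightarrow> 'a set set \<Rightarrow> 'a \<Rightarrow> 'a \<Rightarrow> bool" where
  "reach X E = (\<lambda>a b. a \<in> X \<and> b \<in> X \<and> {a,b} \<in> E)\<^sup>*\<^sup>*"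
definition comp :: "'a set \<Rightarrow> 'a set set \<Rightarrow> 'a \<Rightarrow> 'a set" where
  "comp X E u = {w. reach X E u w}"
definition comps :: "'a set \<Rightarrow> 'a set set \<Rightarrow> 'a set set" where
  "comps X E = comp X E ` X"
definition oddc :: "'a set \<Rightarrow> 'a set set \<Rightarrow> nat" where
  "oddc X E = card {C \<in> comps X E. odd (card C)}"
definition closedin :: "'a set \<Rightarrow> 'a set \<Rightarrow> 'a set set \<Rightarrow> bool" where
  "closedin Y X E \<longleftrightarrow> (\<forall>u\<in>Y. \<forall>w\<in>X. {u,w} \<in> E \<longrightarrow> w \<in> Y)"

lemma reach_refl[simp]: "reach X E u u"
  by (simp add: reach_def)

lemma reach_step: "reach X E u w \<Longrightarrow> w \<in> X \<Longrightarrow> z \<in> X \<Longrightarrow> {w,z} \<in> E \<Longrightarrow> reach X E u z"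
  unfolding reach_def by (rule rtranclp.rtrancl_into_rtrancl) auto

lemma reach_trans: "reach X E u w \<Longrightarrow> reach X E w z \<Longrightarrow> reach X E u z"
  unfolding reach_def by auto

lemma reach_sym: "reach X E u w \<Longrightarrow> reach X E w u"
  unfolding reach_def
proof (induction rule: rtranclp_induct)
  case base then show ?case by simp
next
  case (step y z)
  then have "(\<lambda>a b. a \<in> X \<and> b \<in> X \<and> {a, b} \<in> E) z y" by (auto simp: insert_commute)
  then show ?case using step.IH by (rule converse_rtranclp_into_rtranclp)
qed

lemma reach_mem: "reach X E u w \<Longrightarrow> u \<in> X \<Longrightarrow> w \<in> X"
  unfolding reach_def by (induction rule: rtranclp_induct) auto

lemma reach_mono: "reach Y E u w \<Longrightarrow> Y \<subseteq> X \<Longrightarrow> reach X E u w"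
  unfolding reach_def
  by (induction rule: rtranclp_induct) (auto intro: rtranclp.rtrancl_into_rtrancl)

lemma reach_closed:
  assumes "closedin Y X E" "Y \<subseteq> X" "u \<in> Y" "reach X E u w"
  shows "w \<in> Y \<and> reach Y E u w"
  using assms(4)
  unfolding reach_def
proof (induction rule: rtranclp_induct)
  case base then show ?case using assms by simp
next
  case (step y z)
  then have "z \<in> Y" using assms(1) unfolding closedin_def by blast
  with step show ?case by (auto intro: rtranclp.rtrancl_into_rtrancl)
qed

lemma closedin_compl:
  assumes "closedin Y X E"
  shows "closedin (X - Y) X E"
  using assms unfolding closedin_def by (auto simp: insert_commute)

lemma comp_self: "u \<in> comp X E u" by (simp add: comp_def)

lemma comp_sub: "u \<in> X \<Longrightarrow> comp X E u \<subseteq> X"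
  by (auto simp: comp_def intro: reach_mem)

lemma comp_eq: "w \<in> comp X E u \<Longrightarrow> comp X E w = comp X E u"
proof -
  assume "w \<in> comp X E u"
  then have h: "reach X E u w" by (simp add: comp_def)
  have "reach X E w z \<longleftrightarrow> reach X E u z" for z
    using reach_trans[OF h, of z] reach_trans[OF reach_sym[OF h], of z] by blast
  then show ?thesis by (simp add: comp_def)
qed

lemma compsE:
  assumes "C \<in> comps X E"
  obtains u where "u \<in> X" "C = comp X E u"
  using assms unfolding comps_def by (rule imageE) simp

lemma compsI: "u \<in> X \<Longrightarrow> comp X E u \<in> comps X E"
  unfolding comps_def by (rule imageI)

lemma comps_sub: "C \<in> comps X E \<Longrightarrow> C \<subseteq> X"
proof -
  assume "C \<in> comps X E"
  then obtain u where "u \<in> X" "C = comp X E u" by (rule compsE)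
  then show ?thesis using comp_sub[of u X E] by simp
qed

lemma comps_ne: "C \<in> comps X E \<Longrightarrow> C \<noteq> {}"
proof -
  assume "C \<in> comps X E"
  then obtain u where "C = comp X E u" by (rule compsE)
  then show ?thesis using comp_self[of u X E] by blast
qed

lemma comps_disj: "C \<in> comps X E \<Longrightarrow> D \<in> comps X E \<Longrightarrow> x \<in> C \<Longrightarrow> x \<in> D \<Longrightarrow> C = D"
proof -
  assume a: "C \<in> comps X E" "D \<in> comps X E" "x \<in> C" "x \<in> D"
  obtain u where Cu: "C = comp X E u" using a(1) by (rule compsE)
  obtain w where Dw: "D = comp X E w" using a(2) by (rule compsE)
  have 1: "x \<in> comp X E u" using a(3) unfolding Cu .
  have 2: "x \<in> comp X E w" using a(4) unfolding Dw .
  have "comp X E x = comp X E u" "comp X E x = comp X E w" using comp_eq[OF 1] comp_eq[OF 2] by simp_all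
  then show "C = D" unfolding Cu Dw by simp
qed

lemma comps_Union: "\<Union>(comps X E) = X"
proof
  show "\<Union>(comps X E) \<subseteq> X" using comps_sub by blast
  show "X \<subseteq> \<Union>(comps X E)"
  proof
    fix x assume "x \<in> X"
    then have "comp X E x \<in> comps X E" by (rule compsI)
    then show "x \<in> \<Union>(comps X E)" using comp_self[of x X E] by blast
  qed
qed

lemma comps_finite: "finite X \<Longrightarrow> finite (comps X E)"
  by (simp add: comps_def)

lemma comps_mem: "x \<in> X \<Longrightarrow> \<exists>C\<in>comps X E. x \<in> C"
proof -
  assume "x \<in> X"
  then have "x \<in> \<Union>(comps X E)" by (simp add: comps_Union)
  then show ?thesis unfolding Union_iff .
qed

lemma comps_closed: "C \<in> comps X E \<Longrightarrow> closedin C X E"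
  unfolding comps_def closedin_def comp_def
  by (auto intro: reach_step reach_mem)

lemma comps_conn: "C \<in> comps X E \<Longrightarrow> u \<in> C \<Longrightarrow> w \<in> C \<Longrightarrow> reach C E u w"
proof -
  assume C: "C \<in> comps X E" and u: "u \<in> C" and w: "w \<in> C"
  obtain u0 where "C = comp X E u0" using C by (rule compsE)
  then have "C = comp X E u" using u comp_eq[of u X E u0] by simp
  then have "reach X E u w" using w by (simp add: comp_def)
  then show ?thesis using reach_closed[OF comps_closed[OF C] comps_sub[OF C] u] by blast
qed

lemma comp_closed_conn:
  assumes "C \<subseteq> X" "closedin C X E" "u \<in> C" "\<forall>w\<in>C. reach C E u w"
  shows "C \<in> comps X E"
proof -
  have "comp X E u = C"
    using reach_closed[OF assms(2) assms(1) assms(3)] assms(4) reach_mono[OF _ assms(1)]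
    unfolding comp_def by blast
  then show ?thesis using compsI[of u X E] assms(1,3) by auto
qed

lemma comps_self: "C \<in> comps X E \<Longrightarrow> comps C E = {C}"
proof -
  assume C: "C \<in> comps X E"
  have "comp C E u = C" if "u \<in> C" for u
    using comps_conn[OF C that] reach_mem[of C E u] that unfolding comp_def by blast
  then have "comp C E ` C = {C}" using comps_ne[OF C] by auto
  then show ?thesis unfolding comps_def .
qed

lemma comps_split:
  assumes "Y \<subseteq> X" "closedin Y X E"
  shows "comps X E = comps Y E \<union> comps (X - Y) E"
proof -
  have c2: "closedin (X - Y) X E" using closedin_compl[OF assms(2)] .
  have A: "comp X E u = comp Y E u" if "u \<in> Y" for u
    using reach_closed[OF assms(2) assms(1) that] reach_mono[OF _ assms(1)]
    unfolding comp_def by blast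
  have B: "comp X E u = comp (X - Y) E u" if "u \<in> X - Y" for u
    using reach_closed[OF c2 _ that] reach_mono[of "X - Y" E u _ X]
    unfolding comp_def by blast
  have "comps X E = comp X E ` Y \<union> comp X E ` (X - Y)"
    using assms(1) unfolding comps_def by blast
  also have "\<dots> = comps Y E \<union> comps (X - Y) E"
    unfolding comps_def using A B by (metis (no_types, lifting) image_cong)
  finally show ?thesis .
qed

lemma comps_disj_sets:
  assumes "Y \<inter> Z = {}"
  shows "comps Y E \<inter> comps Z E = {}"
  using comps_sub comps_ne assms by blast

lemma oddc_split:
  assumes "finite X" "Y \<subseteq> X" "closedin Y X E"
  shows "oddc X E = oddc Y E + oddc (X - Y) E"
proof -
  have "{C \<in> comps X E. odd (card C)} = {C \<in> comps Y E. odd (card C)} \<union> {C \<in> comps (X - Y) E. odd (card C)}"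
    using comps_split[OF assms(2,3)] by auto
  moreover have "finite (comps Y E)" "finite (comps (X - Y) E)"
    using assms by (auto intro: comps_finite finite_subset)
  moreover have "comps Y E \<inter> comps (X - Y) E = {}" by (rule comps_disj_sets) auto
  ultimately show ?thesis unfolding oddc_def
    by (subst card_Un_disjoint[symmetric]) auto
qed

lemma sum_parity:
  "finite A \<Longrightarrow> even (\<Sum>C\<in>A. (f C::nat)) \<longleftrightarrow> even (card {C\<in>A. odd (f C)})"
proof (induction A rule: finite_induct)
  case empty then show ?case by simp
next
  case (insert x F)
  have "{C \<in> insert x F. odd (f C)} = (if odd (f x) then insert x {C\<in>F. odd (f C)} else {C\<in>F. odd (f C)})"
    by auto
  with insert show ?case by (auto simp: card_insert_if)
qed

lemma card_comps_sum:
  assumes "finite X"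
  shows "card X = (\<Sum>C\<in>comps X E. card C)"
proof -
  have "card (\<Union>(comps X E)) = (\<Sum>C\<in>comps X E. card C)"
  proof (rule card_Union_disjoint)
    show "pairwise disjnt (comps X E)"
    proof (unfold pairwise_def disjnt_def, intro ballI impI)
      fix C D assume CD: "C \<in> comps X E" "D \<in> comps X E" "C \<noteq> D"
      show "C \<inter> D = {}" using comps_disj[OF CD(1,2)] CD(3) by blast
    qed
    show "\<And>C. C \<in> comps X E \<Longrightarrow> finite C" using assms comps_sub finite_subset by metis
  qed
  then show ?thesis using comps_Union by metis
qed

lemma oddc_parity:
  assumes "finite X"
  shows "even (oddc X E) \<longleftrightarrow> even (card X)"
  unfolding oddc_def card_comps_sum[OF assms, of E]
  using sum_parity[OF comps_finite[OF assms], of card E] by simp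

lemma comps_empty[simp]: "comps {} E = {}" by (simp add: comps_def)


lemma hall:
  fixes A :: "'i set" and f :: "'i \<Rightarrow> 'b set"
  assumes "finite A" "\<forall>a\<in>A. finite (f a)" "\<forall>X. X \<subseteq> A \<longrightarrow> card X \<le> card (\<Union>(f ` X))"
  shows "\<exists>g. inj_on g A \<and> (\<forall>a\<in>A. g a \<in> f a)"
  using assms
proof (induction "card A" arbitrary: A f rule: less_induct)
  case less
  note fin = less.prems(1) and finf = less.prems(2) and hc = less.prems(3)
  have finU: "finite (\<Union>(f ` X))" if "X \<subseteq> A" for X
    using that fin finf finite_subset by (metis finite_UN_I subsetD)
  show ?case
  proof (cases "A = {}")
    case True then show ?thesis by simp
  next
    case Ane: False
    show ?thesis
    proof (cases "\<exists>X. X \<subseteq> A \<and> X \<noteq> {} \<and> X \<noteq> A \<and> card (\<Union>(f ` X)) \<le> card X")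
      case True
      then obtain X where X: "X \<subseteq> A" "X \<noteq> {}" "X \<noteq> A" "card (\<Union>(f ` X)) \<le> card X" by blast
      have cX: "card (\<Union>(f ` X)) = card X" using X hc by (simp add: le_antisym)
      have finX: "finite X" using X(1) fin finite_subset by blast
      have lt1: "card X < card A" using X(1,3) fin by (meson psubsetI psubset_card_mono)
      have h1: "\<forall>Z. Z \<subseteq> X \<longrightarrow> card Z \<le> card (\<Union>(f ` Z))" using hc X(1) by auto
      obtain g1 where g1: "inj_on g1 X" "\<forall>a\<in>X. g1 a \<in> f a"
        using less.hyps[OF lt1 finX _ h1] finf X(1) by blast
      define Y where "Y = \<Union>(f ` X)"
      define f2 where "f2 = (\<lambda>a. f a - Y)"
      have lt2: "card (A - X) < card A" using X(1,2) fin
        by (metis Diff_subset card_seteq diff_le_self le_neq_implies_less card_Diff_subset finX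
            Diff_eq_empty_iff card_0_eq finite_Diff nat_less_le double_diff subset_refl)
      have h2: "card Z \<le> card (\<Union>(f2 ` Z))" if Z: "Z \<subseteq> A - X" for Z
      proof -
        have finZ: "finite Z" using Z fin finite_subset by blast
        have e: "\<Union>(f2 ` Z) = \<Union>(f ` (Z \<union> X)) - Y" unfolding f2_def Y_def by auto
        have sub: "Y \<subseteq> \<Union>(f ` (Z \<union> X))" unfolding Y_def by auto
        have finZX: "finite (\<Union>(f ` (Z \<union> X)))" using finU[of "Z \<union> X"] Z X(1) by auto
        have "card (\<Union>(f2 ` Z)) = card (\<Union>(f ` (Z \<union> X))) - card Y"
          unfolding e using card_Diff_subset[OF finite_subset[OF sub finZX] sub] .
        moreover have "Z \<union> X \<subseteq> A" using Z X(1) by auto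
        then have "card (Z \<union> X) \<le> card (\<Union>(f ` (Z \<union> X)))" using hc by blast
        moreover have "card (Z \<union> X) = card Z + card X"
          using card_Un_disjoint[OF finZ finX] Z by auto
        moreover have "card Y = card X" using cX Y_def by simp
        ultimately show ?thesis by linarith
      qed
      obtain g2 where g2: "inj_on g2 (A - X)" "\<forall>a\<in>A - X. g2 a \<in> f2 a"
        using less.hyps[OF lt2 _ _ , of f2] fin finf h2 unfolding f2_def by auto
      define g where "g = (\<lambda>a. if a \<in> X then g1 a else g2 a)"
      have "inj_on g A"
      proof (rule inj_onI)
        fix a b assume ab: "a \<in> A" "b \<in> A" "g a = g b"
        show "a = b"
        proof (cases "a \<in> X"; cases "b \<in> X")
          assume "a \<in> X" "b \<in> X" then show ?thesis using ab g1(1) unfolding g_def by (auto dest: inj_onD)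
        next
          assume "a \<notin> X" "b \<notin> X" then show ?thesis using ab g2(1) unfolding g_def by (auto dest: inj_onD)
        next
          assume "a \<in> X" "b \<notin> X"
          then have "g a \<in> Y" "g b \<notin> Y" using g1(2) g2(2) ab unfolding g_def Y_def f2_def by auto
          then show ?thesis using ab by simp
        next
          assume "a \<notin> X" "b \<in> X"
          then have "g b \<in> Y" using g1(2) unfolding g_def Y_def by auto
          moreover have "g a \<notin> Y" using g2(2) ab(1) \<open>a \<notin> X\<close> unfolding g_def f2_def by auto
          ultimately show ?thesis using ab by simp
        qed
      qed
      moreover have "\<forall>a\<in>A. g a \<in> f a" using g1(2) g2(2) unfolding g_def f2_def by auto
      ultimately show ?thesis by blast
    next
      case False
      then have strict: "card X < card (\<Union>(f ` X))" if "X \<subseteq> A" "X \<noteq> {}" "X \<noteq> A" for X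
        using that by (meson not_le)
      obtain a0 where a0: "a0 \<in> A" using Ane by blast
      have "card {a0} \<le> card (\<Union>(f ` {a0}))" using hc a0 by blast
      then have "f a0 \<noteq> {}" by auto
      then obtain y where y: "y \<in> f a0" by blast
      define f' where "f' = (\<lambda>a. f a - {y})"
      have lt: "card (A - {a0}) < card A" by (rule card_Diff1_less[OF fin a0])
      have h: "card Z \<le> card (\<Union>(f' ` Z))" if Z: "Z \<subseteq> A - {a0}" for Z
      proof (cases "Z = {}")
        case True then show ?thesis by simp
      next
        case False
        have c1: "card Z < card (\<Union>(f ` Z))" using strict[of Z] Z False a0 by blast
        have e: "\<Union>(f' ` Z) = \<Union>(f ` Z) - {y}" unfolding f'_def by auto
        have c3: "card (\<Union>(f ` Z)) \<le> card (\<Union>(f ` Z) - {y}) + 1"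
          by (simp add: card_Diff_singleton_if; linarith)
        from c1 c3 have "card Z \<le> card (\<Union>(f ` Z) - {y})" by linarith
        then show ?thesis unfolding e .
      qed
      obtain g' where g': "inj_on g' (A - {a0})" "\<forall>a\<in>A - {a0}. g' a \<in> f' a"
        using less.hyps[OF lt _ _, of f'] fin finf h unfolding f'_def by auto
      define g where "g = g'(a0 := y)"
      have "inj_on g A"
      proof (rule inj_onI)
        fix a b assume ab: "a \<in> A" "b \<in> A" "g a = g b"
        show "a = b"
        proof (cases "a = a0"; cases "b = a0")
          assume "a \<noteq> a0" "b \<noteq> a0" then show ?thesis using ab g'(1) unfolding g_def by (auto dest: inj_onD)
        next
          assume "a = a0" "b \<noteq> a0" then show ?thesis using ab g'(2) unfolding g_def f'_def by auto
        next
          assume "a \<noteq> a0" "b = a0" then show ?thesis using ab g'(2) unfolding g_def f'_def by auto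
        qed simp
      qed
      moreover have "\<forall>a\<in>A. g a \<in> f a" using g'(2) y unfolding g_def f'_def by auto
      ultimately show ?thesis by blast
    qed
  qed
qed


definition Er :: "'a set \<Rightarrow> 'a set set \<Rightarrow> 'a set set" where
  "Er W E = {e \<in> E. e \<subseteq> W}"

lemma oddc_comp_single:
  assumes "C \<in> comps X E"
  shows "oddc C E = (if odd (card C) then 1 else 0)"
proof -
  have "{C' \<in> {C}. odd (card C')} = (if odd (card C) then {C} else {})" by auto
  then show ?thesis unfolding oddc_def comps_self[OF assms] by simp
qed

lemma closed_sub_minus:
  assumes "closedin C R E" "C \<subseteq> R"
  shows "closedin (C - Z) (R - Z) E"
  using assms unfolding closedin_def by blast

lemma tutte:
  assumes "finite W" "\<forall>S. S \<subseteq> W \<longrightarrow> oddc (W - S) E \<le> card S"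
  shows "\<exists>M. perfect_matching W (Er W E) M"
  using assms
proof (induction "card W" arbitrary: W rule: less_induct)
  case less
  note finW = less.prems(1) and tc = less.prems(2)
  show ?case
  proof (cases "W = {}")
    case True
    then show ?thesis unfolding perfect_matching_def Er_def by auto
  next
    case Wne: False
    define P where "P S \<longleftrightarrow> S \<subseteq> W \<and> oddc (W - S) E = card S" for S
    define K where "K = {S. P S}"
    have P0: "P {}" using tc[rule_format, of "{}"] unfolding P_def by simp
    have finK: "finite K" unfolding K_def P_def using finW
      by (metis (no_types, lifting) Collect_mono finite_Collect_subsets rev_finite_subset)
    have Kne: "K \<noteq> {}" using P0 unfolding K_def by blast
    obtain S where SK: "S \<in> K" and Smax: "card S = Max (card ` K)"
      using Max_in[of "card ` K"] finK Kne by (metis (no_types, lifting) finite_imageI image_iff image_is_empty)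
    have maxS: "card S' \<le> card S" if "P S'" for S'
      using Max_ge[of "card ` K" "card S'"] finK that Smax unfolding K_def by auto
    have Sw: "S \<subseteq> W" and oS: "oddc (W - S) E = card S" using SK unfolding K_def P_def by auto
    define R where "R = W - S"
    have finR: "finite R" using finW unfolding R_def by simp
    have finS: "finite S" using finW Sw finite_subset by blast
    have notP: "\<not> P S'" if "S' \<subseteq> W" "card S' > card S" for S'
      using maxS that by fastforce
    have allodd: "odd (card C)" if C: "C \<in> comps R E" for C
    proof (rule ccontr)
      assume ev: "\<not> odd (card C)"
      have CR: "C \<subseteq> R" using comps_sub[OF C] .
      have Cne: "C \<noteq> {}" using comps_ne[OF C] .
      then obtain v where v: "v \<in> C" by blast
      have finC: "finite C" using CR finR finite_subset by blast
      have clC: "closedin C R E" using comps_closed[OF C] .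
      have s1: "oddc R E = oddc C E + oddc (R - C) E" using oddc_split[OF finR CR clC] .
      have s1': "oddc C E = 0" using oddc_comp_single[OF C] ev by simp
      have cl2: "closedin (C - {v}) (R - {v}) E" using closed_sub_minus[OF clC CR] .
      have s2: "oddc (R - {v}) E = oddc (C - {v}) E + oddc ((R - {v}) - (C - {v})) E"
        using oddc_split[OF _ _ cl2] finR CR by auto
      have e2: "(R - {v}) - (C - {v}) = R - C" using v CR by auto
      have "card (C - {v}) = card C - 1" using v finC by (simp add: card_Diff_singleton)
      moreover have "card C > 0" using finC v by (auto simp: card_gt_0_iff)
      ultimately have "odd (card (C - {v}))" using ev by presburger
      then have "odd (oddc (C - {v}) E)" using oddc_parity[of "C - {v}" E] finC by simp
      then have g1: "oddc (C - {v}) E \<ge> 1" by (cases "oddc (C - {v}) E") auto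
      define S' where "S' = insert v S"
      have vS: "v \<notin> S" using v CR unfolding R_def by auto
      have S'W: "S' \<subseteq> W" using Sw v CR unfolding S'_def R_def by auto
      have cS': "card S' = card S + 1" unfolding S'_def using vS finS by simp
      have "W - S' = R - {v}" unfolding S'_def R_def by auto
      then have "oddc (W - S') E \<ge> card S'" using s1 s1' s2 e2 g1 oS cS' unfolding R_def by simp
      moreover have "oddc (W - S') E \<le> card S'" using tc S'W by blast
      ultimately have "P S'" unfolding P_def using S'W by simp
      then show False using notP[OF S'W] cS' by simp
    qed
    have cpm: "\<exists>M. perfect_matching (C - {v}) (Er (C - {v}) E) M" if C: "C \<in> comps R E" and v: "v \<in> C" for C v
    proof -
      have CR: "C \<subseteq> R" using comps_sub[OF C] .
      have finC: "finite C" using CR finR finite_subset by blast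
      have clC: "closedin C R E" using comps_closed[OF C] .
      have oC: "odd (card C)" using allodd[OF C] .
      have lt: "card (C - {v}) < card W"
      proof -
        have "C - {v} \<subset> W" using CR v unfolding R_def by auto
        then show ?thesis using finW psubset_card_mono by blast
      qed
      have tcC: "oddc ((C - {v}) - T) E \<le> card T" if T: "T \<subseteq> C - {v}" for T
      proof (rule ccontr)
        assume "\<not> oddc ((C - {v}) - T) E \<le> card T"
        then have gt: "oddc ((C - {v}) - T) E > card T" by simp
        have finT: "finite T" using T finC finite_subset by blast
        have cD0: "card ((C - {v}) - T) = card (C - {v}) - card T"
          using T finT by (simp add: card_Diff_subset)
        have cD: "card ((C - {v}) - T) = card C - 1 - card T"
          unfolding cD0 using finC v by (simp add: card_Diff_singleton)
        have "card C \<ge> 1 + card T"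
        proof -
          have "card T \<le> card (C - {v})" using T finC by (simp add: card_mono)
          moreover have "card C > 0" using finC v by (auto simp: card_gt_0_iff)
          ultimately show ?thesis using v finC by (simp add: card_Diff_singleton)
        qed
        then have "even (card ((C - {v}) - T)) \<longleftrightarrow> even (card T)" using cD oC by auto
        then have "even (oddc ((C - {v}) - T) E) \<longleftrightarrow> even (card T)"
          using oddc_parity[of "(C - {v}) - T" E] finC by simp
        then have gt2: "oddc ((C - {v}) - T) E \<ge> card T + 2" using gt by presburger
        define S' where "S' = S \<union> insert v T"
        have dis: "S \<inter> insert v T = {}" using T v CR unfolding R_def by auto
        have S'W: "S' \<subseteq> W" using Sw v T CR unfolding S'_def R_def by auto
        have cS': "card S' = card S + 1 + card T"
        proof -
          have "card S' = card S + card (insert v T)" unfolding S'_def using card_Un_disjoint[OF finS _ dis] finT by simp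
          moreover have "v \<notin> T" using T by auto
          ultimately show ?thesis using finT by simp
        qed
        have eW: "W - S' = R - insert v T" unfolding S'_def R_def by auto
        have eCT: "(C - {v}) - T = C - insert v T" by auto
        have cl2: "closedin ((C - {v}) - T) (R - insert v T) E"
          unfolding eCT by (rule closed_sub_minus[OF clC CR])
        have sub2: "(C - {v}) - T \<subseteq> R - insert v T" using CR by auto
        have s2: "oddc (R - insert v T) E = oddc ((C - {v}) - T) E + oddc ((R - insert v T) - ((C - {v}) - T)) E"
          using oddc_split[OF _ sub2 cl2] finR by auto
        have e2: "(R - insert v T) - ((C - {v}) - T) = R - C" using v CR T by auto
        have s1: "oddc R E = oddc C E + oddc (R - C) E" using oddc_split[OF finR CR clC] .
        have s1': "oddc C E = 1" using oddc_comp_single[OF C] oC by simp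
        have "oddc (W - S') E \<ge> card S'" using s1 s1' s2 e2 gt2 oS cS' eW unfolding R_def by simp
        moreover have "oddc (W - S') E \<le> card S'" using tc S'W by blast
        ultimately have "P S'" unfolding P_def using S'W by simp
        then show False using notP[OF S'W] cS' by simp
      qed
      have finCv: "finite (C - {v})" using finC by simp
      show ?thesis using less.hyps[OF lt finCv] tcC by blast
    qed
    define f where "f C = {s \<in> S. \<exists>u\<in>C. {s, u} \<in> E}" for C
    have hallc: "card X \<le> card (\<Union>(f ` X))" if X: "X \<subseteq> comps R E" for X
    proof (rule ccontr)
      assume "\<not> card X \<le> card (\<Union>(f ` X))"
      then have lt: "card (\<Union>(f ` X)) < card X" by simp
      define T where "T = \<Union>(f ` X)"
      have TS: "T \<subseteq> S" unfolding T_def f_def by auto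
      have TW: "T \<subseteq> W" using TS Sw by simp
      have inc: "C \<in> comps (W - T) E" if CX: "C \<in> X" for C
      proof -
        have C: "C \<in> comps R E" using X CX by blast
        have CR: "C \<subseteq> R" using comps_sub[OF C] .
        have CWT: "C \<subseteq> W - T" using CR TS unfolding R_def by auto
        have cl: "closedin C (W - T) E"
          unfolding closedin_def
        proof (intro ballI impI)
          fix u w assume u: "u \<in> C" and w: "w \<in> W - T" and e: "{u, w} \<in> E"
          show "w \<in> C"
          proof (cases "w \<in> S")
            case True
            then have "w \<in> f C" unfolding f_def using u e by (auto simp: insert_commute)
            then have "w \<in> T" unfolding T_def using CX by blast
            then show ?thesis using w by simp
          next
            case False
            then have "w \<in> R" using w unfolding R_def by simp
            then show ?thesis using comps_closed[OF C] u e unfolding closedin_def by blast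
          qed
        qed
        obtain u where u: "u \<in> C" using comps_ne[OF C] by blast
        show ?thesis using comp_closed_conn[OF CWT cl u] comps_conn[OF C u] by blast
      qed
      have finWT: "finite (W - T)" using finW by simp
      have "X \<subseteq> {C \<in> comps (W - T) E. odd (card C)}" using inc allodd X by blast
      then have "card X \<le> oddc (W - T) E" unfolding oddc_def
        using card_mono comps_finite[OF finWT] by (metis (no_types, lifting) finite_subset mem_Collect_eq subsetI)
      also have "\<dots> \<le> card T" using tc TW by blast
      finally show False using lt unfolding T_def by simp
    qed
    have finA: "finite (comps R E)" using comps_finite[OF finR] .
    have finf: "\<forall>C\<in>comps R E. finite (f C)" unfolding f_def using finS by simp
    obtain g where g: "inj_on g (comps R E)" "\<forall>C\<in>comps R E. g C \<in> f C"
      using hall[OF finA finf] hallc by blast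
    have gS: "g ` comps R E \<subseteq> S" using g(2) unfolding f_def by auto
    have cA: "card (comps R E) = card S"
    proof -
      have "{C \<in> comps R E. odd (card C)} = comps R E" using allodd by blast
      then show ?thesis using oS unfolding oddc_def R_def by simp
    qed
    have gsurj: "g ` comps R E = S"
      using card_subset_eq[OF finS gS] card_image[OF g(1)] cA by simp
    define u where "u C = (SOME x. x \<in> C \<and> {g C, x} \<in> E)" for C
    have u: "u C \<in> C \<and> {g C, u C} \<in> E" if "C \<in> comps R E" for C
    proof -
      have "\<exists>x. x \<in> C \<and> {g C, x} \<in> E" using g(2) that unfolding f_def by blast
      then show ?thesis unfolding u_def by (rule someI_ex)
    qed
    define MC where "MC C = (SOME M. perfect_matching (C - {u C}) (Er (C - {u C}) E) M)" for C
    have MC: "perfect_matching (C - {u C}) (Er (C - {u C}) E) (MC C)" if "C \<in> comps R E" for C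
      using cpm[OF that conjunct1[OF u[OF that]]] unfolding MC_def by (rule someI_ex)
    define M where "M = (\<lambda>C. {g C, u C}) ` comps R E \<union> \<Union>(MC ` comps R E)"
    have Msub: "M \<subseteq> Er W E"
    proof
      fix e assume "e \<in> M"
      then consider (a) C where "C \<in> comps R E" "e = {g C, u C}" | (b) C where "C \<in> comps R E" "e \<in> MC C"
        unfolding M_def by blast
      then show "e \<in> Er W E"
      proof cases
        case a
        then have "g C \<in> W" "u C \<in> W" using gS Sw u[OF a(1)] comps_sub[OF a(1)] unfolding R_def by auto
        then show ?thesis using a u[OF a(1)] unfolding Er_def by auto
      next
        case b
        then have "e \<in> Er (C - {u C}) E" using MC[OF b(1)] unfolding perfect_matching_def by blast
        then show ?thesis using comps_sub[OF b(1)] unfolding Er_def R_def by auto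
      qed
    qed
    have uniq: "\<exists>!e. e \<in> M \<and> w \<in> e" if w: "w \<in> W" for w
    proof (cases "w \<in> S")
      case True
      then obtain C0 where C0: "C0 \<in> comps R E" "g C0 = w" using gsurj by blast
      show ?thesis
      proof (rule ex1I[of _ "{g C0, u C0}"])
        show "{g C0, u C0} \<in> M \<and> w \<in> {g C0, u C0}" unfolding M_def using C0 by auto
        fix e assume e: "e \<in> M \<and> w \<in> e"
        then consider (a) C where "C \<in> comps R E" "e = {g C, u C}" | (b) C where "C \<in> comps R E" "e \<in> MC C"
          unfolding M_def by blast
        then show "e = {g C0, u C0}"
        proof cases
          case a
          have "u C \<in> R" using u[OF a(1)] comps_sub[OF a(1)] by blast
          then have "w \<noteq> u C" using True unfolding R_def by auto
          then have "w = g C" using e a by auto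
          then have "C = C0" using g(1) C0 a(1) by (metis inj_onD)
          then show ?thesis using a by simp
        next
          case b
          then have "e \<subseteq> C" using MC[OF b(1)] unfolding perfect_matching_def Er_def by blast
          then have "w \<in> R" using e comps_sub[OF b(1)] by blast
          then show ?thesis using True unfolding R_def by simp
        qed
      qed
    next
      case False
      then have wR: "w \<in> R" using w unfolding R_def by simp
      obtain C0 where C0: "C0 \<in> comps R E" "w \<in> C0" using comps_mem[OF wR] by blast
      show ?thesis
      proof (cases "w = u C0")
        case True
        show ?thesis
        proof (rule ex1I[of _ "{g C0, u C0}"])
          show "{g C0, u C0} \<in> M \<and> w \<in> {g C0, u C0}" unfolding M_def using C0 True by auto
          fix e assume e: "e \<in> M \<and> w \<in> e"
          then consider (a) C where "C \<in> comps R E" "e = {g C, u C}" | (b) C where "C \<in> comps R E" "e \<in> MC C"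
            unfolding M_def by blast
          then show "e = {g C0, u C0}"
          proof cases
            case a
            have "g C \<in> S" using gS a(1) by blast
            then have "w \<noteq> g C" using False by auto
            then have "w = u C" using e a by auto
            then have "w \<in> C" using u[OF a(1)] by simp
            then have "C = C0" using comps_disj[OF a(1) C0(1)] C0(2) by simp
            then show ?thesis using a by simp
          next
            case b
            then have "e \<subseteq> C - {u C}" using MC[OF b(1)] unfolding perfect_matching_def Er_def by blast
            then have "w \<in> C" "w \<noteq> u C" using e by auto
            then have "C = C0" using comps_disj[OF b(1) C0(1)] C0(2) by simp
            then show ?thesis using \<open>w \<noteq> u C\<close> True by simp
          qed
        qed
      next
        case wu: False
        have wC: "w \<in> C0 - {u C0}" using C0 wu by simp
        have ex: "\<exists>!e. e \<in> MC C0 \<and> w \<in> e"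
          using MC[OF C0(1)] wC unfolding perfect_matching_def by blast
        from ex obtain e0 where e0a: "e0 \<in> MC C0 \<and> w \<in> e0" and e0b: "\<forall>y. y \<in> MC C0 \<and> w \<in> y \<longrightarrow> y = e0"
          by (rule ex1E)
        have e03: "\<And>e. e \<in> MC C0 \<and> w \<in> e \<Longrightarrow> e = e0"
          using e0b by (rule allE) (rule mp)
        have e0: "e0 \<in> MC C0" "w \<in> e0"
          using e0a by simp_all
        show ?thesis
        proof (rule ex1I[of _ e0])
          show "e0 \<in> M \<and> w \<in> e0" unfolding M_def using C0 e0 by auto
          fix e assume e: "e \<in> M \<and> w \<in> e"
          then consider (a) C where "C \<in> comps R E" "e = {g C, u C}" | (b) C where "C \<in> comps R E" "e \<in> MC C"
            unfolding M_def by blast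
          then show "e = e0"
          proof cases
            case a
            have "g C \<in> S" using gS a(1) by blast
            then have "w \<noteq> g C" using False by auto
            then have "w = u C" using e a by auto
            then have "w \<in> C" using u[OF a(1)] by simp
            then have "C = C0" using comps_disj[OF a(1) C0(1)] C0(2) by simp
            then show ?thesis using \<open>w = u C\<close> wu by simp
          next
            case b
            then have "e \<subseteq> C - {u C}" using MC[OF b(1)] unfolding perfect_matching_def Er_def by blast
            then have "w \<in> C" using e by auto
            then have "C = C0" using comps_disj[OF b(1) C0(1)] C0(2) by simp
            then show ?thesis using e03 b e by blast
          qed
        qed
      qed
    qed
    have "perfect_matching W (Er W E) M"
      unfolding perfect_matching_def
    proof (intro conjI ballI)
      show "M \<subseteq> Er W E" by (rule Msub)
      fix w assume "w \<in> W" then show "\<exists>!e. e \<in> M \<and> w \<in> e" by (rule uniq)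
    qed
    then show ?thesis by (rule exI)
  qed
qed


definition cut :: "'a set set \<Rightarrow> 'a set \<Rightarrow> 'a set set" where
  "cut F X = {e \<in> F. card (e \<inter> X) = 1}"
definition inner :: "'a set set \<Rightarrow> 'a set \<Rightarrow> 'a set set" where
  "inner F X = {e \<in> F. e \<subseteq> X}"

lemma card_filter_sum: "finite F \<Longrightarrow> card {e \<in> F. P e} = (\<Sum>e\<in>F. if P e then 1 else 0)"
  by (simp add: sum.If_cases Int_def)

lemma handshake:
  assumes F: "finite F" "\<forall>e\<in>F. card e = 2" and X: "finite X"
  shows "(\<Sum>u\<in>X. degree F u) = 2 * card (inner F X) + card (cut F X)"
proof -
  have "(\<Sum>u\<in>X. degree F u) = (\<Sum>u\<in>X. \<Sum>e\<in>F. if u \<in> e then 1 else (0::nat))"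
    unfolding degree_def using card_filter_sum[OF F(1)] by simp
  also have "\<dots> = (\<Sum>e\<in>F. \<Sum>u\<in>X. if u \<in> e then 1 else (0::nat))" by (rule sum.swap)
  also have "\<dots> = (\<Sum>e\<in>F. card (e \<inter> X))"
  proof (rule sum.cong)
    fix e assume "e \<in> F"
    have "card (e \<inter> X) = card {u \<in> X. u \<in> e}" by (simp add: Int_commute Int_def)
    then show "(\<Sum>u\<in>X. if u \<in> e then 1 else (0::nat)) = card (e \<inter> X)"
      using card_filter_sum[OF X, of "\<lambda>u. u \<in> e"] by simp
  qed simp
  also have "\<dots> = (\<Sum>e\<in>F. (if e \<subseteq> X then 2 else 0) + (if card (e \<inter> X) = 1 then 1 else 0))"
  proof (rule sum.cong)
    fix e assume e: "e \<in> F"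
    have ce: "card e = 2" using F(2) e by blast
    have fe: "finite e" using ce card.infinite by fastforce
    show "card (e \<inter> X) = (if e \<subseteq> X then 2 else 0) + (if card (e \<inter> X) = 1 then 1 else 0)"
    proof (cases "e \<subseteq> X")
      case True then show ?thesis using ce by (simp add: Int_absorb2)
    next
      case False
      then have "e \<inter> X \<subset> e" by blast
      then have "card (e \<inter> X) < 2" using psubset_card_mono[OF fe] ce by simp
      then show ?thesis using False by auto
    qed
  qed simp
  also have "\<dots> = 2 * card (inner F X) + card (cut F X)"
  proof -
    have "(\<Sum>e\<in>F. if e \<subseteq> X then 2 else (0::nat)) = 2 * (\<Sum>e\<in>F. if e \<subseteq> X then 1 else 0)"
      by (subst sum_distrib_left) (rule sum.cong, auto)
    then show ?thesis
      unfolding sum.distrib inner_def cut_def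
      using card_filter_sum[OF F(1), of "\<lambda>e. e \<subseteq> X"] card_filter_sum[OF F(1), of "\<lambda>e. card (e \<inter> X) = 1"]
      by simp
  qed
  finally show ?thesis .
qed

lemma card_int1: "a \<noteq> b \<Longrightarrow> card ({a,b} \<inter> X) = 1 \<Longrightarrow> (a \<in> X \<and> b \<notin> X) \<or> (b \<in> X \<and> a \<notin> X)"
  by (cases "a \<in> X"; cases "b \<in> X") (auto simp: Int_insert_left)

lemma graph_edge: "graph V E \<Longrightarrow> e \<in> E \<Longrightarrow> \<exists>a b. e = {a,b} \<and> a \<noteq> b \<and> a \<in> V \<and> b \<in> V"
  unfolding graph_def by blast

lemma graph_card2: "graph V E \<Longrightarrow> e \<in> E \<Longrightarrow> card e = 2"
  using graph_edge by fastforce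

lemma graph_sub: "graph V E \<Longrightarrow> e \<in> E \<Longrightarrow> e \<subseteq> V"
  using graph_edge by fastforce

lemma graph_finE: "graph V E \<Longrightarrow> finite E"
proof -
  assume g: "graph V E"
  then have "E \<subseteq> Pow V" using graph_sub by blast
  moreover have "finite V" using g unfolding graph_def by simp
  ultimately show ?thesis by (meson finite_Pow_iff finite_subset)
qed

locale cub =
  fixes V :: "'a set" and E :: "'a set set"
  assumes cubic: "cubic V E" and tc: "three_connected V E"
begin

lemma g: "graph V E" using cubic unfolding cubic_def by simp
lemma finV: "finite V" using g unfolding graph_def by simp
lemma finE: "finite E" using graph_finE[OF g] .
lemma c2: "\<forall>e\<in>E. card e = 2" using graph_card2[OF g] by blast
lemma deg3: "u \<in> V \<Longrightarrow> degree E u = 3" using cubic unfolding cubic_def by simp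
lemma esub: "e \<in> E \<Longrightarrow> e \<subseteq> V" using graph_sub[OF g] .

lemma hs: "X \<subseteq> V \<Longrightarrow> 3 * card X = 2 * card (inner E X) + card (cut E X)"
proof -
  assume X: "X \<subseteq> V"
  then have fX: "finite X" using finV finite_subset by blast
  have "(\<Sum>u\<in>X. degree E u) = 3 * card X" using deg3 X by (simp add: subset_iff)
  then show ?thesis using handshake[OF finE c2 fX] by simp
qed

lemma evenV: "even (card V)"
proof -
  have "cut E V = {}" unfolding cut_def using esub c2 by (auto simp: Int_absorb2)
  then show ?thesis using hs[of V] by simp presburger
qed

lemma cut_parity: "X \<subseteq> V \<Longrightarrow> odd (card (cut E X)) \<longleftrightarrow> odd (card X)"
proof -
  assume "X \<subseteq> V"
  from hs[OF this] show ?thesis by presburger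
qed

lemma connS: "S \<subseteq> V \<Longrightarrow> card S \<le> 2 \<Longrightarrow> u \<in> V - S \<Longrightarrow> w \<in> V - S \<Longrightarrow> reach (V - S) E u w"
proof -
  assume a: "S \<subseteq> V" "card S \<le> 2" "u \<in> V - S" "w \<in> V - S"
  have "connected_on (V - S) E" using tc a(1,2) unfolding three_connected_def by blast
  then show ?thesis using a(3,4) unfolding connected_on_def reach_def by blast
qed

lemma conn: "reach V E u w" if "u \<in> V" "w \<in> V"
  using connS[of "{}" u w] that by simp

lemma conn1: "b \<in> V \<Longrightarrow> u \<in> V - {b} \<Longrightarrow> w \<in> V - {b} \<Longrightarrow> reach (V - {b}) E u w"
  using connS[of "{b}" u w] by simp

lemma cut_mem: "X \<subseteq> V \<Longrightarrow> u \<in> X \<Longrightarrow> w \<notin> X \<Longrightarrow> {u, w} \<in> E \<Longrightarrow> {u, w} \<in> cut E X"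
proof -
  assume "X \<subseteq> V" "u \<in> X" "w \<notin> X" "{u, w} \<in> E"
  then have "{u, w} \<inter> X = {u}" by auto
  then show ?thesis unfolding cut_def using \<open>{u, w} \<in> E\<close> by simp
qed

lemma cut_ne0:
  assumes X: "X \<subseteq> V" "X \<noteq> {}" "X \<noteq> V"
  shows "card (cut E X) \<noteq> 0"
proof
  assume "card (cut E X) = 0"
  then have ce: "cut E X = {}" using finE unfolding cut_def by simp
  obtain a where a: "a \<in> X" using X by blast
  obtain w where w: "w \<in> V" "w \<notin> X" using X by blast
  have cl: "closedin X V E" unfolding closedin_def
  proof (intro ballI impI)
    fix u y assume "u \<in> X" "y \<in> V" "{u, y} \<in> E"
    then show "y \<in> X" using cut_mem[OF X(1)] ce by blast
  qed
  have "reach V E a w" using conn a X(1) w by blast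
  then show False using reach_closed[OF cl X(1) a] w by blast
qed

lemma cut_ne1:
  assumes X: "X \<subseteq> V" "X \<noteq> {}" "X \<noteq> V"
  shows "card (cut E X) \<noteq> 1"
proof
  assume "card (cut E X) = 1"
  then obtain e0 where e0: "cut E X = {e0}" by (rule card_1_singletonE)
  then have e0E: "e0 \<in> E" and ce0: "card (e0 \<inter> X) = 1" unfolding cut_def by auto
  obtain a b where ab: "e0 = {a, b}" "a \<noteq> b" using graph_edge[OF g e0E] by blast
  have "a \<in> X \<and> b \<notin> X \<or> b \<in> X \<and> a \<notin> X"
    using ce0 ab card_int1 by metis
  then obtain a b where ab: "e0 = {a, b}" "a \<in> X" "b \<notin> X"
    using ab by (metis insert_commute)
  have bV: "b \<in> V" using esub[OF e0E] ab by auto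
  have onlycut: "y = b" if "u \<in> X" "y \<notin> X" "{u, y} \<in> E" for u y
  proof -
    have "{u, y} \<in> cut E X" using cut_mem[OF X(1) that] .
    then have "{u, y} = {a, b}" using e0 ab by simp
    then show ?thesis using that ab by (metis doubleton_eq_iff)
  qed
  show False
  proof (cases "V - X = {b}")
    case True
    have "{e \<in> E. b \<in> e} \<subseteq> {e0}"
    proof
      fix e assume e: "e \<in> {e \<in> E. b \<in> e}"
      then obtain y where y: "e = {b, y}" "y \<noteq> b" "y \<in> V"
        using graph_edge[OF g] by (metis (no_types, lifting) insertE insert_commute mem_Collect_eq singletonD)
      then have "y \<in> X" using True by blast
      then have "e \<in> cut E X" using cut_mem[OF X(1) \<open>y \<in> X\<close> ab(3)] e y by (simp add: insert_commute)
      then show "e \<in> {e0}" using e0 by simp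
    qed
    then have "card {e \<in> E. b \<in> e} \<le> card {e0}" by (intro card_mono) simp_all
    then have "degree E b \<le> 1" unfolding degree_def by simp
    then show False using deg3[OF bV] by simp
  next
    case False
    then obtain w where w: "w \<in> V" "w \<notin> X" "w \<noteq> b" using X bV ab by blast
    have cl: "closedin X (V - {b}) E" unfolding closedin_def
    proof (intro ballI impI)
      fix u y assume "u \<in> X" "y \<in> V - {b}" "{u, y} \<in> E"
      then show "y \<in> X" using onlycut by blast
    qed
    have "reach (V - {b}) E a w" using conn1[OF bV] ab X(1) w by blast
    moreover have "X \<subseteq> V - {b}" using X ab by blast
    ultimately show False using reach_closed[OF cl _ ab(2)] w by blast
  qed
qed

lemma cut_ge:
  assumes X: "X \<subseteq> V" "X \<noteq> {}" "X \<noteq> V"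
  shows "card (cut E X) \<ge> (if odd (card X) then 3 else 2)"
proof -
  have "card (cut E X) \<noteq> 0" "card (cut E X) \<noteq> 1" using cut_ne0[OF X] cut_ne1[OF X] .
  moreover have "odd (card (cut E X)) \<longleftrightarrow> odd (card X)" using cut_parity X(1) .
  ultimately show ?thesis by presburger
qed

lemma comp_cut:
  assumes T: "T \<subseteq> V" and K: "K \<in> comps (V - T) E" and e: "e \<in> cut E K"
  shows "e \<in> cut E T \<and> (\<exists>a b. e = {a, b} \<and> a \<in> K \<and> b \<in> T)"
proof -
  have eE: "e \<in> E" and ce: "card (e \<inter> K) = 1" using e unfolding cut_def by auto
  obtain a b where ab: "e = {a, b}" "a \<noteq> b" "a \<in> V" "b \<in> V" using graph_edge[OF g eE] by blast
  have KV: "K \<subseteq> V - T" using comps_sub[OF K] .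
  have "a \<in> K \<and> b \<notin> K \<or> b \<in> K \<and> a \<notin> K"
    using ce ab card_int1 by metis
  then obtain a b where ab: "e = {a, b}" "a \<in> K" "b \<notin> K" "b \<in> V"
    using ab by (metis insert_commute)
  have "b \<in> T"
  proof (rule ccontr)
    assume "b \<notin> T"
    then have "b \<in> V - T" using ab by simp
    then show False using comps_closed[OF K] ab eE unfolding closedin_def by blast
  qed
  moreover have "a \<notin> T" using ab KV by blast
  ultimately have "e \<inter> T = {b}" using ab by auto
  then show ?thesis unfolding cut_def using eE ab \<open>b \<in> T\<close> by auto
qed

lemma comp_cut_disj:
  assumes T: "T \<subseteq> V" and K: "K \<in> comps (V - T) E" and K': "K' \<in> comps (V - T) E"
    and e: "e \<in> cut E K" "e \<in> cut E K'"
  shows "K = K'"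
proof -
  obtain a b where ab: "e = {a, b}" "a \<in> K" "b \<in> T" using comp_cut[OF T K e(1)] by blast
  obtain a' b' where ab': "e = {a', b'}" "a' \<in> K'" "b' \<in> T" using comp_cut[OF T K' e(2)] by blast
  have "a \<notin> T" "a' \<notin> T" using comps_sub[OF K] comps_sub[OF K'] ab ab' by auto
  then have "a = a'" using ab ab' by (metis doubleton_eq_iff)
  then show ?thesis using comps_disj[OF K K'] ab ab' by simp
qed

lemma barrier:
  assumes T: "T \<subseteq> V" "T \<noteq> {}" and odd: "card T \<le> oddc (V - T) E"
  shows "inner E T = {}" "\<And>K. K \<in> comps (V - T) E \<Longrightarrow> odd (card K) \<and> card (cut E K) = 3"
    "oddc (V - T) E = card T" "card (comps (V - T) E) = card T"
proof -
  define A where "A = comps (V - T) E"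
  have finA: "finite A" unfolding A_def using finV by (simp add: comps_finite)
  define h where "h (K::'a set) = (if odd (card K) then 3 else (2::nat))" for K
  have Kprop: "K \<subseteq> V" "K \<noteq> {}" "K \<noteq> V" if "K \<in> A" for K
    using comps_sub[of K "V - T" E] comps_ne[of K "V - T" E] that T unfolding A_def by auto
  have hle: "h K \<le> card (cut E K)" if "K \<in> A" for K
    using cut_ge[OF Kprop[OF that]] unfolding h_def by simp
  have "(\<Sum>K\<in>A. card (cut E K)) = card (\<Union>K\<in>A. cut E K)"
  proof (rule card_UN_disjoint[symmetric])
    show "finite A" by (rule finA)
    show "\<forall>K\<in>A. finite (cut E K)" using finE unfolding cut_def by simp
    show "\<forall>K\<in>A. \<forall>K'\<in>A. K \<noteq> K' \<longrightarrow> cut E K \<inter> cut E K' = {}"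
      using comp_cut_disj[OF T(1)] unfolding A_def by blast
  qed
  also have "\<dots> \<le> card (cut E T)"
  proof (rule card_mono)
    show "finite (cut E T)" using finE unfolding cut_def by simp
    show "(\<Union>K\<in>A. cut E K) \<subseteq> cut E T" using comp_cut[OF T(1)] unfolding A_def by blast
  qed
  finally have s1: "(\<Sum>K\<in>A. card (cut E K)) \<le> card (cut E T)" .
  have s2: "card (cut E T) = 3 * card T - 2 * card (inner E T)" using hs[OF T(1)] by simp
  define Od where "Od = {K \<in> A. odd (card K)}"
  define Ev where "Ev = {K \<in> A. \<not> odd (card K)}"
  have oO: "oddc (V - T) E = card Od" unfolding oddc_def Od_def A_def by simp
  have sh: "(\<Sum>K\<in>A. h K) = 3 * card Od + 2 * card Ev"
    unfolding h_def sum.If_cases[OF finA] Od_def Ev_def by (simp add: Int_def Collect_neg_eq[symmetric])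
  have le: "(\<Sum>K\<in>A. h K) \<le> (\<Sum>K\<in>A. card (cut E K))" by (rule sum_mono) (rule hle)
  have main: "3 * card Od + 2 * card Ev + 2 * card (inner E T) \<le> 3 * card T"
    using s1 s2 sh le hs[OF T(1)] by linarith
  have cO: "card Od \<ge> card T" using odd oO by simp
  have in0: "card (inner E T) = 0" and ev0: "card Ev = 0" and eqT: "card Od = card T" using main cO by linarith+
  show "inner E T = {}" using in0 finE unfolding inner_def by simp
  have finEv: "finite Ev" using finA unfolding Ev_def by simp
  have Ev0: "Ev = {}" using ev0 finEv by simp
  have allodd: "odd (card K)" if "K \<in> A" for K using Ev0 that unfolding Ev_def by blast
  have AO: "A = Od" using allodd unfolding Od_def by blast
  show "oddc (V - T) E = card T" using oO eqT by simp
  show "card (comps (V - T) E) = card T" using AO eqT unfolding A_def by simp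
  have sumeq: "(\<Sum>K\<in>A. card (cut E K)) = (\<Sum>K\<in>A. h K)"
    using s1 s2 sh le hs[OF T(1)] in0 ev0 eqT by linarith
  fix K assume K: "K \<in> comps (V - T) E"
  then have KA: "K \<in> A" unfolding A_def .
  have "card (cut E K) = h K"
  proof (rule ccontr)
    assume "card (cut E K) \<noteq> h K"
    then have "h K < card (cut E K)" using hle[OF KA] by simp
    then have "(\<Sum>K\<in>A. h K) < (\<Sum>K\<in>A. card (cut E K))"
      using sum_strict_mono_ex1[OF finA, of h "\<lambda>K. card (cut E K)"] hle KA by blast
    then show False using sumeq by simp
  qed
  then show "odd (card K) \<and> card (cut E K) = 3" using allodd[OF KA] unfolding h_def by simp
qed

end


lemma cut_memF: "u \<in> X \<Longrightarrow> w \<notin> X \<Longrightarrow> {u, w} \<in> F \<Longrightarrow> {u, w} \<in> cut F X"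
proof -
  assume "u \<in> X" "w \<notin> X" "{u, w} \<in> F"
  then have "{u, w} \<inter> X = {u}" by auto
  then show ?thesis unfolding cut_def using \<open>{u, w} \<in> F\<close> by simp
qed

lemma pm_unique: "perfect_matching V E M \<Longrightarrow> u \<in> V \<Longrightarrow> e \<in> M \<Longrightarrow> u \<in> e \<Longrightarrow> e' \<in> M \<Longrightarrow> u \<in> e' \<Longrightarrow> e = e'"
  unfolding perfect_matching_def by blast

lemma pm_ex: "perfect_matching V E M \<Longrightarrow> u \<in> V \<Longrightarrow> \<exists>e\<in>M. u \<in> e"
  unfolding perfect_matching_def by blast

lemma pm_deg: "perfect_matching V E M \<Longrightarrow> u \<in> V \<Longrightarrow> degree M u = 1"
proof -
  assume pm: "perfect_matching V E M" and u: "u \<in> V"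
  obtain e where e: "e \<in> M" "u \<in> e" using pm_ex[OF pm u] by blast
  have "{e \<in> M. u \<in> e} = {e}" using pm_unique[OF pm u] e by blast
  then show ?thesis unfolding degree_def by simp
qed

context cub begin

lemma pm_sub: "perfect_matching V E M \<Longrightarrow> M \<subseteq> E"
  unfolding perfect_matching_def by simp

lemma pm_fin: "perfect_matching V E M \<Longrightarrow> finite M"
  using pm_sub finE finite_subset by blast

lemma pm_c2: "perfect_matching V E M \<Longrightarrow> \<forall>e\<in>M. card e = 2"
  using pm_sub c2 by blast

lemma pm_hs: "perfect_matching V E M \<Longrightarrow> X \<subseteq> V \<Longrightarrow> card X = 2 * card (inner M X) + card (cut M X)"
proof -
  assume pm: "perfect_matching V E M" and X: "X \<subseteq> V"
  have fX: "finite X" using X finV finite_subset by blast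
  have "(\<Sum>u\<in>X. degree M u) = card X" using pm_deg[OF pm] X by (simp add: subset_iff)
  then show ?thesis using handshake[OF pm_fin[OF pm] pm_c2[OF pm] fX] by simp
qed

lemma edge_ab: "{a, b} \<in> E \<Longrightarrow> a \<noteq> b \<and> a \<in> V \<and> b \<in> V"
proof -
  assume e: "{a, b} \<in> E"
  obtain x y where "{a, b} = {x, y}" "x \<noteq> y" "x \<in> V" "y \<in> V" using graph_edge[OF g e] by blast
  then show ?thesis by (metis doubleton_eq_iff)
qed

lemma pm_edge:
  assumes e: "{a, b} \<in> E"
  shows "\<exists>M. perfect_matching V E M \<and> {a, b} \<in> M"
proof -
  have ab: "a \<noteq> b" "a \<in> V" "b \<in> V" using edge_ab[OF e] by auto
  define W where "W = V - {a, b}"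
  have finW: "finite W" using finV unfolding W_def by simp
  show ?thesis
  proof (cases "\<forall>S. S \<subseteq> W \<longrightarrow> oddc (W - S) E \<le> card S")
    case True
    obtain M0 where M0: "perfect_matching W (Er W E) M0" using tutte[OF finW True] by blast
    define M where "M = insert {a, b} M0"
    have M0sub: "\<And>e. e \<in> M0 \<Longrightarrow> e \<in> E \<and> e \<subseteq> W" using M0 unfolding perfect_matching_def Er_def by blast
    have "perfect_matching V E M"
      unfolding perfect_matching_def
    proof (intro conjI ballI)
      show "M \<subseteq> E" unfolding M_def using e M0sub by blast
      fix u assume u: "u \<in> V"
      show "\<exists>!e. e \<in> M \<and> u \<in> e"
      proof (cases "u \<in> {a, b}")
        case True
        show ?thesis
        proof (rule ex1I[of _ "{a, b}"])
          show "{a, b} \<in> M \<and> u \<in> {a, b}" unfolding M_def using True by simp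
          fix e' assume e': "e' \<in> M \<and> u \<in> e'"
          show "e' = {a, b}"
          proof (rule ccontr)
            assume "e' \<noteq> {a, b}"
            then have "e' \<in> M0" using e' unfolding M_def by simp
            then have "e' \<subseteq> W" using M0sub by blast
            then show False using e' True unfolding W_def by blast
          qed
        qed
      next
        case False
        then have uW: "u \<in> W" unfolding W_def using u by simp
        have ex: "\<exists>!e. e \<in> M0 \<and> u \<in> e" using M0 uW unfolding perfect_matching_def by blast
        then obtain e0 where e0: "e0 \<in> M0" "u \<in> e0" by blast
        show ?thesis
        proof (rule ex1I[of _ e0])
          show "e0 \<in> M \<and> u \<in> e0" unfolding M_def using e0 by simp
          fix e' assume e': "e' \<in> M \<and> u \<in> e'"
          then have "e' \<in> M0" unfolding M_def using False by auto
          then show "e' = e0" using pm_unique[OF M0 uW] e0 e' by blast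
        qed
      qed
    qed
    then show ?thesis unfolding M_def by blast
  next
    case False
    then obtain S where S: "S \<subseteq> W" "oddc (W - S) E > card S" by (meson not_le)
    define T where "T = insert a (insert b S)"
    have TV: "T \<subseteq> V" "T \<noteq> {}" using S ab unfolding T_def W_def by auto
    have VT: "V - T = W - S" unfolding T_def W_def by auto
    have finS: "finite S" using S finW finite_subset by blast
    have abS: "a \<notin> S" "b \<notin> S" using S unfolding W_def by auto
    have cT: "card T = card S + 2" unfolding T_def using finS abS ab by simp
    have cWS: "card (W - S) + card S + 2 = card V"
    proof -
      have "card (W - S) = card W - card S" using S finS by (simp add: card_Diff_subset)
      moreover have "card W = card V - 2" unfolding W_def using ab finV by (simp add: card_Diff_subset)
      moreover have "card S \<le> card W" using S finW by (simp add: card_mono)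
      moreover have "card V \<ge> 2"
      proof -
        have "card {a, b} \<le> card V" using ab finV by (intro card_mono) auto
        then show ?thesis using ab by simp
      qed
      ultimately show ?thesis by linarith
    qed
    have par: "even (oddc (W - S) E) \<longleftrightarrow> even (card (W - S))" using oddc_parity[of "W - S" E] finW by simp
    have "oddc (W - S) E \<ge> card S + 2" using S(2) par cWS evenV by presburger
    then have "card T \<le> oddc (V - T) E" using VT cT by simp
    then have "inner E T = {}" using barrier(1)[OF TV] by blast
    moreover have "{a, b} \<in> inner E T" unfolding inner_def T_def using e by simp
    ultimately show ?thesis by simp
  qed
qed

lemma pm_barrier:
  assumes T: "T \<subseteq> V" and inT: "inner E T = {}"
    and ao: "\<And>K. K \<in> comps (V - T) E \<Longrightarrow> odd (card K)"
    and cc: "card (comps (V - T) E) = card T"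
    and pm: "perfect_matching V E M" and K: "K \<in> comps (V - T) E"
  shows "card (cut M K) = 1"
proof -
  define A where "A = comps (V - T) E"
  have finA: "finite A" unfolding A_def using finV by (simp add: comps_finite)
  have KV: "K' \<subseteq> V" if "K' \<in> A" for K' using comps_sub[of K' "V - T" E] that unfolding A_def by auto
  have ge1: "card (cut M K') \<ge> 1" if "K' \<in> A" for K'
  proof -
    have "odd (card K')" using ao that unfolding A_def by blast
    then have "odd (card (cut M K'))" using pm_hs[OF pm KV[OF that]] by presburger
    then show ?thesis by (cases "card (cut M K')") auto
  qed
  have ims: "inner M T = {}" using inT pm_sub[OF pm] unfolding inner_def by blast
  have cMT: "card (cut M T) = card T" using pm_hs[OF pm T] ims by simp
  have cutsub: "cut M K' \<subseteq> cut E K'" for K' using pm_sub[OF pm] unfolding cut_def by blast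
  have "(\<Sum>K\<in>A. card (cut M K)) = card (\<Union>K\<in>A. cut M K)"
  proof (rule card_UN_disjoint[symmetric])
    show "finite A" by (rule finA)
    show "\<forall>K\<in>A. finite (cut M K)" using pm_fin[OF pm] unfolding cut_def by simp
    show "\<forall>K\<in>A. \<forall>K'\<in>A. K \<noteq> K' \<longrightarrow> cut M K \<inter> cut M K' = {}"
      using comp_cut_disj[OF T] cutsub unfolding A_def by blast
  qed
  also have "\<dots> \<le> card (cut M T)"
  proof (rule card_mono)
    show "finite (cut M T)" using pm_fin[OF pm] unfolding cut_def by simp
    show "(\<Union>K\<in>A. cut M K) \<subseteq> cut M T"
    proof
      fix e assume "e \<in> (\<Union>K\<in>A. cut M K)"
      then obtain K' where K': "K' \<in> A" "e \<in> cut M K'" by blast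
      then have "e \<in> cut E T" using comp_cut[OF T, of K' e] cutsub unfolding A_def by blast
      moreover have "e \<in> M" using K' unfolding cut_def by simp
      ultimately show "e \<in> cut M T" unfolding cut_def by simp
    qed
  qed
  finally have s: "(\<Sum>K\<in>A. card (cut M K)) \<le> card A" using cMT cc unfolding A_def by simp
  show ?thesis
  proof (rule ccontr)
    assume "card (cut M K) \<noteq> 1"
    then have "1 < card (cut M K)" using ge1 K unfolding A_def by fastforce
    then have "(\<Sum>K\<in>A. (1::nat)) < (\<Sum>K\<in>A. card (cut M K))"
      using sum_strict_mono_ex1[OF finA, of "\<lambda>_. 1" "\<lambda>K. card (cut M K)"] ge1 K unfolding A_def by blast
    then show False using s by simp
  qed
qed

lemma comp_minus_pm:
  assumes T: "T \<subseteq> V" and inT: "inner E T = {}"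
    and ao: "\<And>K. K \<in> comps (V - T) E \<Longrightarrow> odd (card K)"
    and cc: "card (comps (V - T) E) = card T"
    and K: "K \<in> comps (V - T) E" and u: "u \<in> K" and t: "t \<in> T" and ut: "{u, t} \<in> E"
  shows "\<exists>P. perfect_matching (K - {u}) (Er (K - {u}) E) P"
proof -
  obtain M where pm: "perfect_matching V E M" and utM: "{u, t} \<in> M" using pm_edge[OF ut] by blast
  have KVT: "K \<subseteq> V - T" using comps_sub[OF K] .
  have tK: "t \<notin> K" using t KVT by blast
  have c1: "card (cut M K) = 1" using pm_barrier[OF T inT ao cc pm K] .
  have utc: "{u, t} \<in> cut M K" using cut_memF[OF u tK utM] .
  have cMK: "cut M K = {{u, t}}"
  proof -
    obtain x where "cut M K = {x}" using c1 by (rule card_1_singletonE)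
    then show ?thesis using utc by simp
  qed
  define P where "P = {e \<in> M. e \<subseteq> K - {u}}"
  have "perfect_matching (K - {u}) (Er (K - {u}) E) P"
    unfolding perfect_matching_def
  proof (intro conjI ballI)
    show "P \<subseteq> Er (K - {u}) E" unfolding P_def Er_def using pm_sub[OF pm] by blast
    fix w assume w: "w \<in> K - {u}"
    have wV: "w \<in> V" using w KVT by blast
    obtain e where e: "e \<in> M" "w \<in> e" using pm_ex[OF pm wV] by blast
    have eE: "e \<in> E" using e pm_sub[OF pm] by blast
    obtain y where y: "e = {w, y}" using graph_edge[OF g eE] e(2) by (metis insert_commute insertE singletonD)
    have yK: "y \<in> K"
    proof (rule ccontr)
      assume "y \<notin> K"
      then have "e \<in> cut M K" using cut_memF[of w K y M] w e y by simp
      then have "e = {u, t}" using cMK by simp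
      then show False using y w tK by (metis Diff_iff doubleton_eq_iff insertI1)
    qed
    have yu: "y \<noteq> u"
    proof
      assume "y = u"
      then have "u \<in> e" using y by simp
      moreover have "u \<in> V" using u KVT by blast
      ultimately have "e = {u, t}" using pm_unique[OF pm _ e(1) _ utM] by simp
      then show False using y w tK \<open>y = u\<close> by (metis Diff_iff doubleton_eq_iff insertI1)
    qed
    have eP: "e \<in> P" unfolding P_def using e y yK yu w by auto
    show "\<exists>!e. e \<in> P \<and> w \<in> e"
    proof (rule ex1I[of _ e])
      show "e \<in> P \<and> w \<in> e" using eP e by simp
      fix e' assume "e' \<in> P \<and> w \<in> e'"
      then show "e' = e" using pm_unique[OF pm wV e(1) e(2)] unfolding P_def by blast
    qed
  qed
  then show ?thesis by blast
qed

end


lemma periodic: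
  assumes fin: "finite D" and ne: "p0 \<in> D" and f: "\<And>s. s \<in> D \<Longrightarrow> f s \<in> D"
  shows "\<exists>p\<in>D. \<exists>k>0. (f ^^ k) p = p"
proof -
  have it: "(f ^^ i) p0 \<in> D" for i by (induction i) (auto simp: ne f)
  have "\<not> inj_on (\<lambda>i. (f ^^ i) p0) {0..card D}"
  proof
    assume inj: "inj_on (\<lambda>i. (f ^^ i) p0) {0..card D}"
    have "(\<lambda>i. (f ^^ i) p0) ` {0..card D} \<subseteq> D" using it by blast
    then have "card ((\<lambda>i. (f ^^ i) p0) ` {0..card D}) \<le> card D" using fin by (simp add: card_mono)
    then show False using card_image[OF inj] by simp
  qed
  then obtain i j where ij: "i \<in> {0..card D}" "j \<in> {0..card D}" "i \<noteq> j" "(f ^^ i) p0 = (f ^^ j) p0"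
    unfolding inj_on_def by blast
  then obtain a b where ab: "a < b" "(f ^^ a) p0 = (f ^^ b) p0"
    by (metis nat_neq_iff)
  have "(f ^^ (b - a)) ((f ^^ a) p0) = (f ^^ b) p0"
    by (metis ab(1) funpow_add le_add_diff_inverse2 less_imp_le_nat o_apply)
  then have "(f ^^ (b - a)) ((f ^^ a) p0) = (f ^^ a) p0" using ab(2) by simp
  then show ?thesis using it ab(1) by (metis zero_less_diff)
qed

lemma orbit_cycle:
  assumes fin: "finite D" and p: "p \<in> D" and f: "\<And>s. s \<in> D \<Longrightarrow> f s \<in> D" and k: "k > 0" "(f ^^ k) p = p"
  defines "Cy \<equiv> {(f ^^ i) p | i. True}"
  shows "Cy \<subseteq> D" "p \<in> Cy" "f ` Cy = Cy" "inj_on f Cy"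
proof -
  have it: "(f ^^ i) p \<in> D" for i by (induction i) (auto simp: p f)
  show CyD: "Cy \<subseteq> D" unfolding Cy_def using it by blast
  show "p \<in> Cy" unfolding Cy_def by (metis (mono_tags, lifting) funpow_0 mem_Collect_eq)
  have "f ` Cy \<subseteq> Cy"
  proof
    fix y assume "y \<in> f ` Cy"
    then obtain i where "y = f ((f ^^ i) p)" unfolding Cy_def by blast
    then have "y = (f ^^ Suc i) p" by simp
    then show "y \<in> Cy" unfolding Cy_def by blast
  qed
  moreover have "Cy \<subseteq> f ` Cy"
  proof
    fix y assume "y \<in> Cy"
    then obtain i where i: "y = (f ^^ i) p" unfolding Cy_def by blast
    have "(f ^^ (i + k)) p = (f ^^ i) ((f ^^ k) p)" by (simp add: funpow_add)
    then have "(f ^^ (i + k)) p = y" using i k by simp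
    moreover have "i + k = Suc (i + k - 1)" using k by simp
    ultimately have "y = f ((f ^^ (i + k - 1)) p)" by (metis comp_apply funpow.simps(2))
    then show "y \<in> f ` Cy" unfolding Cy_def by blast
  qed
  ultimately show fC: "f ` Cy = Cy" by blast
  have "finite Cy" using CyD fin finite_subset by blast
  then show "inj_on f Cy" using fC by (simp add: eq_card_imp_inj_on)
qed


locale barr = cub +
  fixes T :: "'a set" and v x :: 'a and M :: "'a set set"
  assumes TV: "T \<subseteq> V" and inT: "inner E T = {}"
    and ao: "\<And>K. K \<in> comps (V - T) E \<Longrightarrow> odd (card K)"
    and cc: "card (comps (V - T) E) = card T"
    and vc: "{v} \<in> comps (V - T) E"
    and xT: "x \<in> T" and pm: "perfect_matching V E M" and vx: "{v, x} \<in> M"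
    and Dne: "T - {x} \<noteq> {}"
begin

lemma vVT: "v \<in> V" "v \<notin> T" using comps_sub[OF vc] by auto

lemma tnbr: "t \<in> T \<Longrightarrow> {t, y} \<in> E \<Longrightarrow> y \<notin> T"
  using inT unfolding inner_def by blast

lemma cutedge: "K \<in> comps (V - T) E \<Longrightarrow> w \<in> K \<Longrightarrow> {w, y} \<in> E \<Longrightarrow> y \<notin> K \<Longrightarrow> y \<in> T"
proof -
  assume K: "K \<in> comps (V - T) E" and w: "w \<in> K" and e: "{w, y} \<in> E" and y: "y \<notin> K"
  have "y \<in> V" using esub[OF e] by blast
  moreover have "y \<notin> V - T" using comps_closed[OF K] w e y unfolding closedin_def by blast
  ultimately show "y \<in> T" by blast
qed

lemma cM1: "K \<in> comps (V - T) E \<Longrightarrow> card (cut M K) = 1"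
  using pm_barrier[OF TV inT ao cc pm] .

lemma cutM1:
  assumes K: "K \<in> comps (V - T) E" and t: "t \<in> T" "t' \<in> T" and y: "y \<in> K" "y' \<in> K"
    and e: "{t, y} \<in> M" "{t', y'} \<in> M"
  shows "t = t' \<and> y = y'"
proof -
  have KT: "K \<subseteq> V - T" using comps_sub[OF K] .
  have "{y, t} \<in> cut M K" using cut_memF[OF y(1), of t M] e(1) KT t by (auto simp: insert_commute)
  moreover have "{y', t'} \<in> cut M K" using cut_memF[OF y(2), of t' M] e(2) KT t by (auto simp: insert_commute)
  moreover obtain c where "cut M K = {c}" using cM1[OF K] by (rule card_1_singletonE)
  ultimately have "{y, t} = {y', t'}" by simp
  moreover have "y \<noteq> t'" using y KT t by blast
  ultimately show ?thesis by (metis doubleton_eq_iff)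
qed

lemma cutex: "K \<in> comps (V - T) E \<Longrightarrow> \<exists>t\<in>T. \<exists>y\<in>K. {t, y} \<in> M"
proof -
  assume K: "K \<in> comps (V - T) E"
  obtain c where c: "cut M K = {c}" using cM1[OF K] by (rule card_1_singletonE)
  then have "c \<in> cut E K" "c \<in> M" using pm_sub[OF pm] unfolding cut_def by auto
  then obtain a b where "c = {a, b}" "a \<in> K" "b \<in> T" using comp_cut[OF TV K] by blast
  then show ?thesis using \<open>c \<in> M\<close> by (metis insert_commute)
qed

definition D where "D = T - {x}"

lemma wex:
  assumes s: "s \<in> D"
  shows "\<exists>w. {s, w} \<in> E \<and> {s, w} \<notin> M \<and> w \<notin> T \<and> w \<noteq> v"
proof -
  have sT: "s \<in> T" using s unfolding D_def by simp
  have sV: "s \<in> V" using sT TV by blast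
  obtain m where m: "m \<in> M" "s \<in> m" using pm_ex[OF pm sV] by blast
  define Es where "Es = {e \<in> E. s \<in> e}"
  have cEs: "card Es = 3" using deg3[OF sV] unfolding degree_def Es_def .
  have "card Es - card {m, {s, v}} \<le> card (Es - {m, {s, v}})" by (rule diff_card_le_card_Diff) simp
  moreover have "card {m, {s, v}} \<le> 2" by (simp add: card_insert_le_m1)
  ultimately have c1: "card (Es - {m, {s, v}}) \<ge> 1" using cEs by linarith
  have "Es - {m, {s, v}} \<noteq> {}"
  proof
    assume h: "Es - {m, {s, v}} = {}"
    have "card (Es - {m, {s, v}}) = 0" unfolding h by (rule card.empty)
    then show False using c1 by linarith
  qed
  then obtain e where "e \<in> Es - {m, {s, v}}" by blast
  then have e: "e \<in> Es" "e \<noteq> m" "e \<noteq> {s, v}" by auto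
  have eE: "e \<in> E" "s \<in> e" using e(1) unfolding Es_def by auto
  obtain w where w: "e = {s, w}" using graph_edge[OF g eE(1)] eE(2) by (metis insert_commute insertE singletonD)
  have "w \<notin> T" using tnbr[OF sT] eE w by simp
  moreover have "w \<noteq> v" using e(3) w by blast
  moreover have "e \<notin> M" using pm_unique[OF pm sV m] eE e(2) by blast
  ultimately show ?thesis using eE w by blast
qed

definition wf where "wf s = (SOME w. {s, w} \<in> E \<and> {s, w} \<notin> M \<and> w \<notin> T \<and> w \<noteq> v)" for s

lemma wf: "s \<in> D \<Longrightarrow> {s, wf s} \<in> E \<and> {s, wf s} \<notin> M \<and> wf s \<notin> T \<and> wf s \<noteq> v"
  unfolding wf_def using wex by (rule someI_ex)

definition Kf where "Kf s = comp (V - T) E (wf s)" for s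

lemma wfV: "s \<in> D \<Longrightarrow> wf s \<in> V - T"
  using wf esub by blast

lemma Kf: "s \<in> D \<Longrightarrow> Kf s \<in> comps (V - T) E"
  unfolding Kf_def using wfV by (rule compsI)

lemma wfK: "wf s \<in> Kf s" unfolding Kf_def by (rule comp_self)

lemma KfT: "s \<in> D \<Longrightarrow> Kf s \<subseteq> V - T" using comps_sub[OF Kf] .

lemma Kfv: "s \<in> D \<Longrightarrow> v \<notin> Kf s"
proof
  assume s: "s \<in> D" and "v \<in> Kf s"
  then have "Kf s = {v}" using comps_disj[OF Kf[OF s] vc] by simp
  then show False using wfK[of s] wf[OF s] by simp
qed

definition nxt where "nxt s = (SOME t. t \<in> T \<and> (\<exists>y\<in>Kf s. {t, y} \<in> M))" for s

lemma nxt: "s \<in> D \<Longrightarrow> nxt s \<in> T \<and> (\<exists>y\<in>Kf s. {nxt s, y} \<in> M)"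
proof -
  assume s: "s \<in> D"
  have "\<exists>t. t \<in> T \<and> (\<exists>y\<in>Kf s. {t, y} \<in> M)" using cutex[OF Kf[OF s]] by blast
  then show ?thesis unfolding nxt_def by (rule someI_ex)
qed

lemma nxtD: "s \<in> D \<Longrightarrow> nxt s \<in> D"
proof -
  assume s: "s \<in> D"
  obtain y where y: "y \<in> Kf s" "{nxt s, y} \<in> M" using nxt[OF s] by blast
  have "nxt s \<noteq> x"
  proof
    assume "nxt s = x"
    then have "{x, y} = {v, x}" using pm_unique[OF pm _ y(2) _ vx] xT TV by auto
    moreover have "y \<noteq> x" using y(1) KfT[OF s] xT by blast
    ultimately have "y = v" by (metis doubleton_eq_iff)
    then show False using Kfv[OF s] y(1) by simp
  qed
  then show ?thesis using nxt[OF s] unfolding D_def by simp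
qed

lemma finD: "finite D" unfolding D_def using TV finV finite_subset by blast

end


context barr begin

lemma construct:
  assumes CyD: "Cy \<subseteq> D" and pC: "p \<in> Cy" and sur: "nxt ` Cy = Cy" and inj: "inj_on nxt Cy"
  shows "\<exists>M'. perfect_matching V E M' \<and> {v, x} \<in> M' \<and> M' \<noteq> M"
proof -
  have CyT: "s \<in> T" if "s \<in> Cy" for s using CyD that unfolding D_def by blast
  have CyDs: "s \<in> D" if "s \<in> Cy" for s using CyD that by blast
  have Kinj: "s = s'" if a: "s \<in> Cy" "s' \<in> Cy" "Kf s = Kf s'" for s s'
  proof -
    obtain y where y: "y \<in> Kf s" "{nxt s, y} \<in> M" using nxt[OF CyDs[OF a(1)]] by blast
    obtain y' where y': "y' \<in> Kf s'" "{nxt s', y'} \<in> M" using nxt[OF CyDs[OF a(2)]] by blast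
    have "nxt s = nxt s'"
      using cutM1[OF Kf[OF CyDs[OF a(1)]] _ _ y(1) _ y(2) y'(2)] y'(1) a(3)
        nxt[OF CyDs[OF a(1)]] nxt[OF CyDs[OF a(2)]] by simp
    then show ?thesis using inj_onD[OF inj _ a(1,2)] by simp
  qed
  have Kuniq: "s = s'" if "s \<in> Cy" "s' \<in> Cy" "w \<in> Kf s" "w \<in> Kf s'" for s s' w
    using Kinj[OF that(1,2)] comps_disj[OF Kf[OF CyDs[OF that(1)]] Kf[OF CyDs[OF that(2)]] that(3,4)] by simp
  define Pf where "Pf s = (SOME P. perfect_matching (Kf s - {wf s}) (Er (Kf s - {wf s}) E) P)" for s
  have Pf: "perfect_matching (Kf s - {wf s}) (Er (Kf s - {wf s}) E) (Pf s)" if s: "s \<in> Cy" for s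
  proof -
    have "{wf s, s} \<in> E" using wf[OF CyDs[OF s]] by (simp add: insert_commute)
    then have "\<exists>P. perfect_matching (Kf s - {wf s}) (Er (Kf s - {wf s}) E) P"
      using comp_minus_pm[OF TV inT ao cc Kf[OF CyDs[OF s]] wfK CyT[OF s]] by blast
    then show ?thesis unfolding Pf_def by (rule someI_ex)
  qed
  have Pfsub: "e \<in> E \<and> e \<subseteq> Kf s - {wf s}" if "s \<in> Cy" "e \<in> Pf s" for s e
    using Pf[OF that(1)] that(2) unfolding perfect_matching_def Er_def by blast
  define G1 where "G1 = {e \<in> M. (\<forall>s\<in>Cy. s \<notin> e) \<and> (\<forall>s\<in>Cy. \<not> e \<subseteq> Kf s)}"
  define M' where "M' = G1 \<union> (\<lambda>s. {s, wf s}) ` Cy \<union> (\<Union>s\<in>Cy. Pf s)"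
  have mcases: "e \<in> G1 \<or> (\<exists>s\<in>Cy. e = {s, wf s}) \<or> (\<exists>s\<in>Cy. e \<in> Pf s)" if "e \<in> M'" for e
    using that unfolding M'_def by blast
  have mKf: "e \<notin> G1" if s: "s \<in> Cy" and e: "e \<in> M" "w \<in> e" and w: "w \<in> Kf s" for s e w
  proof
    assume eG: "e \<in> G1"
    have eE: "e \<in> E" using e pm_sub[OF pm] by blast
    obtain y where y: "e = {w, y}" using graph_edge[OF g eE] e(2) by (metis insert_commute insertE singletonD)
    show False
    proof (cases "y \<in> Kf s")
      case True
      then have "e \<subseteq> Kf s" using y w by simp
      then show False using eG s unfolding G1_def by blast
    next
      case False
      then have yT: "y \<in> T" using cutedge[OF Kf[OF CyDs[OF s]] w] eE y by simp
      obtain y' where y': "y' \<in> Kf s" "{nxt s, y'} \<in> M" using nxt[OF CyDs[OF s]] by blast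
      have "{y, w} \<in> M" using e y by (simp add: insert_commute)
      then have "y = nxt s" using cutM1[OF Kf[OF CyDs[OF s]] yT _ w y'(1) _ y'(2)] nxt[OF CyDs[OF s]] by simp
      moreover have "nxt s \<in> Cy" using sur s by blast
      ultimately show False using eG y unfolding G1_def by blast
    qed
  qed
  have G1M: "G1 \<subseteq> M" unfolding G1_def by blast
  have uniq: "\<exists>!e. e \<in> M' \<and> w \<in> e" if wV: "w \<in> V" for w
  proof (cases "w \<in> T")
    case wT: True
    show ?thesis
    proof (cases "w \<in> Cy")
      case True
      show ?thesis
      proof (rule ex1I[of _ "{w, wf w}"])
        show "{w, wf w} \<in> M' \<and> w \<in> {w, wf w}" unfolding M'_def using True by blast
        fix e assume e: "e \<in> M' \<and> w \<in> e"
        then consider (a) "e \<in> G1" | (b) s where "s \<in> Cy" "e = {s, wf s}" | (c) s where "s \<in> Cy" "e \<in> Pf s"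
          using mcases by blast
        then show "e = {w, wf w}"
        proof cases
          case a then show ?thesis using e True unfolding G1_def by blast
        next
          case b
          have "wf s \<notin> T" using wf[OF CyDs[OF b(1)]] by simp
          then have "w = s" using e b wT by auto
          then show ?thesis using b by simp
        next
          case c
          then have "w \<in> Kf s" using Pfsub[OF c] e by blast
          then show ?thesis using KfT[OF CyDs[OF c(1)]] wT by blast
        qed
      qed
    next
      case False
      obtain e0 where e0: "e0 \<in> M" "w \<in> e0" using pm_ex[OF pm wV] by blast
      have e0E: "e0 \<in> E" using e0 pm_sub[OF pm] by blast
      obtain y where y: "e0 = {w, y}" using graph_edge[OF g e0E] e0(2) by (metis insert_commute insertE singletonD)
      have yT: "y \<notin> T" using tnbr[OF wT] e0E y by simp
      have "e0 \<in> G1" unfolding G1_def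
      proof (intro CollectI conjI ballI)
        show "e0 \<in> M" by (rule e0(1))
        fix s assume s: "s \<in> Cy"
        show "s \<notin> e0" using y CyT[OF s] yT False s by auto
        show "\<not> e0 \<subseteq> Kf s" using e0(2) KfT[OF CyDs[OF s]] wT by blast
      qed
      show ?thesis
      proof (rule ex1I[of _ e0])
        show "e0 \<in> M' \<and> w \<in> e0" unfolding M'_def using \<open>e0 \<in> G1\<close> e0 by blast
        fix e assume e: "e \<in> M' \<and> w \<in> e"
        then consider (a) "e \<in> G1" | (b) s where "s \<in> Cy" "e = {s, wf s}" | (c) s where "s \<in> Cy" "e \<in> Pf s"
          using mcases by blast
        then show "e = e0"
        proof cases
          case a then show ?thesis using pm_unique[OF pm wV _ _ e0] e G1M by blast
        next
          case b
          have "wf s \<notin> T" using wf[OF CyDs[OF b(1)]] by simp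
          then have "w = s" using e b wT by auto
          then show ?thesis using b False by simp
        next
          case c
          then have "w \<in> Kf s" using Pfsub[OF c] e by blast
          then show ?thesis using KfT[OF CyDs[OF c(1)]] wT by blast
        qed
      qed
    qed
  next
    case wT: False
    show ?thesis
    proof (cases "\<exists>s\<in>Cy. w \<in> Kf s")
      case True
      then obtain s where s: "s \<in> Cy" "w \<in> Kf s" by blast
      show ?thesis
      proof (cases "w = wf s")
        case True
        show ?thesis
        proof (rule ex1I[of _ "{s, wf s}"])
          show "{s, wf s} \<in> M' \<and> w \<in> {s, wf s}" unfolding M'_def using True s by blast
          fix e assume e: "e \<in> M' \<and> w \<in> e"
          then consider (a) "e \<in> G1" | (b) s' where "s' \<in> Cy" "e = {s', wf s'}" | (c) s' where "s' \<in> Cy" "e \<in> Pf s'"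
            using mcases by blast
          then show "e = {s, wf s}"
          proof cases
            case a then show ?thesis using mKf[OF s(1) _ _ s(2)] e G1M by blast
          next
            case b
            then have "w = wf s'" using e wT CyT[OF b(1)] by auto
            then have "w \<in> Kf s'" using wfK by simp
            then have "s' = s" using Kuniq[OF b(1) s(1)] s(2) by simp
            then show ?thesis using b by simp
          next
            case c
            then have "w \<in> Kf s'" "w \<noteq> wf s'" using Pfsub[OF c] e by blast+
            then have "s' = s" using Kuniq[OF c(1) s(1)] s(2) by simp
            then show ?thesis using \<open>w \<noteq> wf s'\<close> True by simp
          qed
        qed
      next
        case False
        have wK: "w \<in> Kf s - {wf s}" using s False by simp
        have ex: "\<exists>!e. e \<in> Pf s \<and> w \<in> e" using Pf[OF s(1)] wK unfolding perfect_matching_def by blast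
        then obtain e0 where e0: "e0 \<in> Pf s" "w \<in> e0" by blast
        show ?thesis
        proof (rule ex1I[of _ e0])
          show "e0 \<in> M' \<and> w \<in> e0" unfolding M'_def using e0 s by blast
          fix e assume e: "e \<in> M' \<and> w \<in> e"
          then consider (a) "e \<in> G1" | (b) s' where "s' \<in> Cy" "e = {s', wf s'}" | (c) s' where "s' \<in> Cy" "e \<in> Pf s'"
            using mcases by blast
          then show "e = e0"
          proof cases
            case a then show ?thesis using mKf[OF s(1) _ _ s(2)] e G1M by blast
          next
            case b
            then have "w = wf s'" using e wT CyT[OF b(1)] by auto
            then have "w \<in> Kf s'" using wfK by simp
            then have "s' = s" using Kuniq[OF b(1) s(1)] s(2) by simp
            then show ?thesis using b \<open>w = wf s'\<close> False by simp
          next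
            case c
            then have "w \<in> Kf s'" using Pfsub[OF c] e by blast
            then have "s' = s" using Kuniq[OF c(1) s(1)] s(2) by simp
            then show ?thesis using pm_unique[OF Pf[OF s(1)] wK _ _ e0] c e by blast
          qed
        qed
      qed
    next
      case False
      obtain e0 where e0: "e0 \<in> M" "w \<in> e0" using pm_ex[OF pm wV] by blast
      have e0E: "e0 \<in> E" using e0 pm_sub[OF pm] by blast
      obtain y where y: "e0 = {w, y}" using graph_edge[OF g e0E] e0(2) by (metis insert_commute insertE singletonD)
      have "e0 \<in> G1" unfolding G1_def
      proof (intro CollectI conjI ballI)
        show "e0 \<in> M" by (rule e0(1))
        fix s assume s: "s \<in> Cy"
        show "s \<notin> e0"
        proof
          assume "s \<in> e0"
          then have sy: "s = y" using y CyT[OF s] wT by auto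
          obtain s'' where s'': "s'' \<in> Cy" "s = nxt s''" using sur s by blast
          obtain y'' where y'': "y'' \<in> Kf s''" "{nxt s'', y''} \<in> M" using nxt[OF CyDs[OF s''(1)]] by blast
          have sV: "s \<in> V" using CyT[OF s] TV by blast
          have "{s, y''} = {w, s}" using pm_unique[OF pm sV, of "{s, y''}" "{w, s}"] y'' s'' e0 y sy by simp
          then have "y'' = w" by (metis doubleton_eq_iff)
          then show False using False s''(1) y''(1) by blast
        qed
        show "\<not> e0 \<subseteq> Kf s" using e0(2) False s by blast
      qed
      show ?thesis
      proof (rule ex1I[of _ e0])
        show "e0 \<in> M' \<and> w \<in> e0" unfolding M'_def using \<open>e0 \<in> G1\<close> e0 by blast
        fix e assume e: "e \<in> M' \<and> w \<in> e"
        then consider (a) "e \<in> G1" | (b) s where "s \<in> Cy" "e = {s, wf s}" | (c) s where "s \<in> Cy" "e \<in> Pf s"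
          using mcases by blast
        then show "e = e0"
        proof cases
          case a then show ?thesis using pm_unique[OF pm wV _ _ e0] e G1M by blast
        next
          case b
          then have "w = wf s" using e wT CyT[OF b(1)] by auto
          then have "w \<in> Kf s" using wfK by simp
          then show ?thesis using False b(1) by blast
        next
          case c
          then have "w \<in> Kf s" using Pfsub[OF c] e by blast
          then show ?thesis using False c(1) by blast
        qed
      qed
    qed
  qed
  have M'E: "M' \<subseteq> E"
  proof
    fix e assume "e \<in> M'"
    then consider (a) "e \<in> G1" | (b) s where "s \<in> Cy" "e = {s, wf s}" | (c) s where "s \<in> Cy" "e \<in> Pf s"
      using mcases by blast
    then show "e \<in> E"
    proof cases
      case a then show ?thesis using G1M pm_sub[OF pm] by blast
    next
      case b then show ?thesis using wf[OF CyDs[OF b(1)]] by simp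
    next
      case c then show ?thesis using Pfsub[OF c] by blast
    qed
  qed
  have pm': "perfect_matching V E M'"
    unfolding perfect_matching_def
  proof (intro conjI ballI)
    show "M' \<subseteq> E" by (rule M'E)
    fix w assume "w \<in> V" then show "\<exists>!e. e \<in> M' \<and> w \<in> e" by (rule uniq)
  qed
  have "{v, x} \<in> G1" unfolding G1_def
  proof (intro CollectI conjI ballI)
    show "{v, x} \<in> M" by (rule vx)
    fix s assume s: "s \<in> Cy"
    show "s \<notin> {v, x}" using CyDs[OF s] vVT(2) CyT[OF s] unfolding D_def by auto
    show "\<not> {v, x} \<subseteq> Kf s" using xT KfT[OF CyDs[OF s]] by blast
  qed
  then have vxM': "{v, x} \<in> M'" unfolding M'_def by blast
  have "{p, wf p} \<in> M'" unfolding M'_def using pC by blast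
  moreover have "{p, wf p} \<notin> M" using wf[OF CyDs[OF pC]] by simp
  ultimately have "M' \<noteq> M" by blast
  then show ?thesis using pm' vxM' by blast
qed

lemma two_pms: "\<exists>M'. perfect_matching V E M' \<and> {v, x} \<in> M' \<and> M' \<noteq> M"
proof -
  obtain p0 where p0: "p0 \<in> D" using Dne unfolding D_def by blast
  have "\<exists>p\<in>D. \<exists>k>0. (nxt ^^ k) p = p" by (rule periodic[OF finD p0 nxtD])
  then obtain p where p: "p \<in> D" "\<exists>k>0. (nxt ^^ k) p = p" by (rule bexE)
  from p(2) obtain k where k: "k > 0" "(nxt ^^ k) p = p" by (elim exE conjE)
  define Cy where "Cy = {(nxt ^^ i) p | i. True}"
  note oc = orbit_cycle[OF finD p(1) nxtD k, folded Cy_def]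
  show ?thesis by (rule construct[OF oc])
qed

end


context cub begin

lemma nbr_iff: "y \<in> neighbours E v \<longleftrightarrow> {v, y} \<in> E" unfolding neighbours_def by simp

lemma nbr_ne: "y \<in> neighbours E v \<Longrightarrow> y \<noteq> v \<and> y \<in> V \<and> v \<in> V"
  using edge_ab nbr_iff by blast

lemma vedges: "{e \<in> E. v \<in> e} = (\<lambda>y. {v, y}) ` neighbours E v"
proof
  show "{e \<in> E. v \<in> e} \<subseteq> (\<lambda>y. {v, y}) ` neighbours E v"
  proof
    fix e assume e: "e \<in> {e \<in> E. v \<in> e}"
    then obtain y where "e = {v, y}" using graph_edge[OF g] by (metis (no_types, lifting) insertE insert_commute mem_Collect_eq singletonD)
    then show "e \<in> (\<lambda>y. {v, y}) ` neighbours E v" using e nbr_iff by blast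
  qed
  show "(\<lambda>y. {v, y}) ` neighbours E v \<subseteq> {e \<in> E. v \<in> e}" using nbr_iff by blast
qed

lemma vinj: "inj_on (\<lambda>y. {v, y}) (neighbours E v)"
  by (rule inj_onI) (metis doubleton_eq_iff)

lemma card_nbr: "v \<in> V \<Longrightarrow> card (neighbours E v) = 3"
  using deg3[of v] vedges[of v] card_image[OF vinj[of v]] unfolding degree_def by simp

lemma nbr_fin: "finite (neighbours E v)"
proof -
  have "neighbours E v \<subseteq> V" using nbr_ne by blast
  then show ?thesis using finV finite_subset by blast
qed

lemma join_of_pm:
  assumes v: "v \<in> V" and P: "perfect_matching (V - insert v (neighbours E v)) (Er (V - insert v (neighbours E v)) E) P"
  shows "vjoin V E v (P \<union> (\<lambda>y. {v, y}) ` neighbours E v)"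
proof -
  define N where "N = neighbours E v"
  define W where "W = V - insert v N"
  define J where "J = P \<union> (\<lambda>y. {v, y}) ` N"
  have Psub: "e \<in> E \<and> e \<subseteq> W" if "e \<in> P" for e using P that unfolding perfect_matching_def Er_def W_def N_def by blast
  have JE: "J \<subseteq> E" unfolding J_def N_def using Psub nbr_iff by blast
  have "{e \<in> J. v \<in> e} = (\<lambda>y. {v, y}) ` N"
  proof
    show "{e \<in> J. v \<in> e} \<subseteq> (\<lambda>y. {v, y}) ` N" unfolding J_def using Psub unfolding W_def by blast
    show "(\<lambda>y. {v, y}) ` N \<subseteq> {e \<in> J. v \<in> e}" unfolding J_def by blast
  qed
  then have dv: "degree J v = 3" unfolding degree_def N_def using card_image[OF vinj[of v]] card_nbr[OF v] by simp
  have du: "degree J u = 1" if u: "u \<in> V - {v}" for u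
  proof (cases "u \<in> N")
    case True
    have "{e \<in> J. u \<in> e} = {{v, u}}"
    proof
      show "{e \<in> J. u \<in> e} \<subseteq> {{v, u}}"
      proof
        fix e assume e: "e \<in> {e \<in> J. u \<in> e}"
        show "e \<in> {{v, u}}"
        proof (cases "e \<in> P")
          case True then show ?thesis using Psub e \<open>u \<in> N\<close> unfolding W_def by blast
        next
          case False
          then obtain y where "e = {v, y}" using e unfolding J_def by blast
          then show ?thesis using e u by auto
        qed
      qed
      show "{{v, u}} \<subseteq> {e \<in> J. u \<in> e}" unfolding J_def using True by blast
    qed
    then show ?thesis unfolding degree_def by simp
  next
    case False
    then have uW: "u \<in> W" using u unfolding W_def by blast
    have ex: "\<exists>!e. e \<in> P \<and> u \<in> e" using P uW unfolding perfect_matching_def W_def N_def by blast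
    then obtain e0 where e0: "e0 \<in> P" "u \<in> e0" by blast
    have "{e \<in> J. u \<in> e} = {e0}"
    proof
      show "{e \<in> J. u \<in> e} \<subseteq> {e0}"
      proof
        fix e assume e: "e \<in> {e \<in> J. u \<in> e}"
        show "e \<in> {e0}"
        proof (cases "e \<in> P")
          case True then show ?thesis using ex e0 e by auto
        next
          case False
          then obtain y where "e = {v, y}" "y \<in> N" using e unfolding J_def by blast
          then show ?thesis using e u \<open>u \<notin> N\<close> by auto
        qed
      qed
      show "{e0} \<subseteq> {e \<in> J. u \<in> e}" unfolding J_def using e0 by blast
    qed
    then show ?thesis unfolding degree_def by simp
  qed
  show ?thesis unfolding vjoin_def J_def[symmetric] N_def[symmetric] using JE dv du by blast
qed

lemma F2:
  assumes v: "v \<in> V" and x: "x \<in> neighbours E v" and nj: "\<not> (\<exists>J. vjoin V E v J)"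
  shows "\<exists>M M'. perfect_matching V E M \<and> perfect_matching V E M' \<and> {v, x} \<in> M \<and> {v, x} \<in> M' \<and> M \<noteq> M'"
proof -
  define N where "N = neighbours E v"
  define W where "W = V - insert v N"
  have NV: "N \<subseteq> V" "v \<notin> N" using nbr_ne unfolding N_def by blast+
  have cN: "card N = 3" using card_nbr[OF v] unfolding N_def .
  have finN: "finite N" using nbr_fin unfolding N_def .
  have finW: "finite W" using finV unfolding W_def by simp
  have "\<not> (\<forall>S. S \<subseteq> W \<longrightarrow> oddc (W - S) E \<le> card S)"
  proof
    assume "\<forall>S. S \<subseteq> W \<longrightarrow> oddc (W - S) E \<le> card S"
    then obtain P where "perfect_matching W (Er W E) P" using tutte[OF finW] by blast
    then have "vjoin V E v (P \<union> (\<lambda>y. {v, y}) ` neighbours E v)" using join_of_pm[OF v] unfolding W_def N_def by blast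
    then show False using nj by blast
  qed
  then obtain S where S: "S \<subseteq> W" "oddc (W - S) E > card S" by (meson not_le)
  define T where "T = S \<union> N"
  have finS: "finite S" using S finW finite_subset by blast
  have SN: "S \<inter> N = {}" using S unfolding W_def by blast
  have cT: "card T = card S + 3" unfolding T_def using card_Un_disjoint[OF finS finN SN] cN by simp
  have TV: "T \<subseteq> V" "T \<noteq> {}" using S NV cN unfolding T_def W_def by auto
  have vT: "v \<notin> T" using S NV unfolding T_def W_def by blast
  have VT: "V - T - {v} = W - S" unfolding T_def W_def by auto
  have clv: "closedin {v} (V - T) E" unfolding closedin_def
  proof (intro ballI impI)
    fix u w assume "u \<in> {v}" "w \<in> V - T" "{u, w} \<in> E"
    then have "w \<in> N" using nbr_iff unfolding N_def by simp
    then show "w \<in> {v}" using \<open>w \<in> V - T\<close> unfolding T_def by blast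
  qed
  have vVT: "{v} \<subseteq> V - T" using v vT by simp
  have vc: "{v} \<in> comps (V - T) E"
  proof (rule comp_closed_conn[OF vVT clv])
    show "v \<in> {v}" by simp
    show "\<forall>w\<in>{v}. reach {v} E v w" using reach_refl[of "{v}" E v] by simp
  qed
  have ov: "oddc {v} E = 1" using oddc_comp_single[OF vc] by simp
  have finVT: "finite (V - T)" using finV by simp
  have so: "oddc (V - T) E = oddc {v} E + oddc (V - T - {v}) E" using oddc_split[OF finVT vVT clv] .
  have cWS: "card (W - S) + card S + 4 = card V"
  proof -
    have "card (W - S) = card W - card S" using S finS by (simp add: card_Diff_subset)
    moreover have "card (insert v N) = 4" using cN finN NV by simp
    moreover have "card W = card V - card (insert v N)" unfolding W_def using NV v finN
      by (simp add: card_Diff_subset)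
    moreover have "card S \<le> card W" using S finW by (simp add: card_mono)
    moreover have "card (insert v N) \<le> card V" using NV v finV by (intro card_mono) auto
    ultimately show ?thesis by linarith
  qed
  have par: "even (oddc (W - S) E) \<longleftrightarrow> even (card (W - S))" using oddc_parity[of "W - S" E] finW by simp
  have "oddc (W - S) E \<ge> card S + 2" using S(2) par cWS evenV by presburger
  then have oT: "card T \<le> oddc (V - T) E" using so ov VT cT by simp
  have b1: "inner E T = {}" using barrier(1)[OF TV oT] .
  have b2: "\<And>K. K \<in> comps (V - T) E \<Longrightarrow> odd (card K)" using barrier(2)[OF TV oT] by blast
  have b4: "card (comps (V - T) E) = card T" using barrier(4)[OF TV oT] .
  have vxE: "{v, x} \<in> E" using x nbr_iff by simp
  obtain M where M: "perfect_matching V E M" "{v, x} \<in> M" using pm_edge[OF vxE] by blast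
  have xT: "x \<in> T" using x unfolding T_def N_def by simp
  have Dne: "T - {x} \<noteq> {}"
  proof
    assume "T - {x} = {}"
    then have "N \<subseteq> {x}" unfolding T_def by blast
    then have "card N \<le> 1" using card_mono by (metis card.empty card.insert empty_iff finite.intros(1,2) One_nat_def)
    then show False using cN by simp
  qed
  interpret barr V E T v x M
    by unfold_locales (fact TV(1) b1 b2 b4 vc xT M(1) M(2) Dne)+
  obtain M' where "perfect_matching V E M'" "{v, x} \<in> M'" "M' \<noteq> M" using two_pms by blast
  then show ?thesis using M by blast
qed

end


lemma oe_v: "y \<noteq> v \<Longrightarrow> old_edge v {v, y} = {Inr y, Inl y}"
proof -
  assume "y \<noteq> v"
  then have "{v, y} - {v} = {y}" by auto
  then show ?thesis unfolding old_edge_def by simp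
qed

lemma oe_nv: "v \<notin> e \<Longrightarrow> old_edge v e = Inl ` e"
  unfolding old_edge_def by simp

locale tri = cub +
  fixes v :: 'a
  assumes vV: "v \<in> V"
begin

abbreviation "N \<equiv> neighbours E v"
abbreviation "V' \<equiv> tri_vertices V E v"
abbreviation "E' \<equiv> tri_edges V E v"

lemma edge_form: "e \<in> E \<Longrightarrow> (\<exists>y. y \<noteq> v \<and> e = {v, y} \<and> y \<in> N) \<or> (v \<notin> e)"
proof -
  assume e: "e \<in> E"
  obtain a b where ab: "e = {a, b}" "a \<noteq> b" using graph_edge[OF g e] by blast
  show ?thesis
  proof (cases "v \<in> e")
    case True
    then obtain y where "e = {v, y}" using ab by auto
    then show ?thesis using e ab nbr_iff by (metis doubleton_eq_iff)
  qed simp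
qed

lemma old_Inl: "e \<in> E \<Longrightarrow> Inl u \<in> old_edge v e \<longleftrightarrow> u \<in> e \<and> u \<noteq> v"
proof -
  assume e: "e \<in> E"
  show ?thesis
  proof (cases "v \<in> e")
    case True
    then obtain y where y: "y \<noteq> v" "e = {v, y}" using edge_form[OF e] by blast
    show ?thesis unfolding y(2) oe_v[OF y(1)] using y(1) by auto
  next
    case False then show ?thesis unfolding oe_nv[OF False] by auto
  qed
qed

lemma old_Inr: "e \<in> E \<Longrightarrow> Inr y \<in> old_edge v e \<longleftrightarrow> e = {v, y} \<and> y \<noteq> v"
proof -
  assume e: "e \<in> E"
  show ?thesis
  proof (cases "v \<in> e")
    case True
    then obtain y' where y: "y' \<noteq> v" "e = {v, y'}" using edge_form[OF e] by blast
    show ?thesis unfolding y(2) oe_v[OF y(1)] using y(1) by (auto simp: doubleton_eq_iff)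
  next
    case False then show ?thesis unfolding oe_nv[OF False] by auto
  qed
qed

lemma old_hasInl: "e \<in> E \<Longrightarrow> \<exists>u. Inl u \<in> old_edge v e"
proof -
  assume e: "e \<in> E"
  obtain a b where ab: "e = {a, b}" "a \<noteq> b" using graph_edge[OF g e] by blast
  then have "a \<noteq> v \<or> b \<noteq> v" by blast
  then show ?thesis using old_Inl[OF e] ab by blast
qed

lemma old_inj: "e \<in> E \<Longrightarrow> e' \<in> E \<Longrightarrow> old_edge v e = old_edge v e' \<Longrightarrow> e = e'"
proof -
  assume e: "e \<in> E" and e': "e' \<in> E" and eq: "old_edge v e = old_edge v e'"
  have "u \<in> e \<longleftrightarrow> u \<in> e'" if "u \<noteq> v" for u using old_Inl[OF e, of u] old_Inl[OF e', of u] eq that by simp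
  moreover have "v \<in> e \<longleftrightarrow> v \<in> e'"
  proof -
    have "v \<in> e \<longleftrightarrow> (\<exists>y. Inr y \<in> old_edge v e)" using old_Inr[OF e] edge_form[OF e] by blast
    moreover have "v \<in> e' \<longleftrightarrow> (\<exists>y. Inr y \<in> old_edge v e')" using old_Inr[OF e'] edge_form[OF e'] by blast
    ultimately show ?thesis using eq by simp
  qed
  ultimately have "\<forall>u. u \<in> e \<longleftrightarrow> u \<in> e'" by metis
  then show ?thesis by blast
qed

definition tris where "tris = {{Inr y, Inr z} | y z. y \<in> N \<and> z \<in> N \<and> y \<noteq> z}"

lemma E'_def2: "E' = old_edge v ` E \<union> tris" unfolding tri_edges_def tris_def by simp

lemma tri_noInl: "f \<in> tris \<Longrightarrow> Inl u \<notin> f" unfolding tris_def by auto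

lemma old_not_tri: "e \<in> E \<Longrightarrow> old_edge v e \<notin> tris"
proof
  assume e: "e \<in> E" and t: "old_edge v e \<in> tris"
  obtain u where "Inl u \<in> old_edge v e" using old_hasInl[OF e] by blast
  then show False using tri_noInl[OF t] by simp
qed

lemma V'_iff: "Inl u \<in> V' \<longleftrightarrow> u \<in> V \<and> u \<noteq> v" "Inr y \<in> V' \<longleftrightarrow> y \<in> N"
  unfolding tri_vertices_def by auto

definition Bk where "Bk M' = {e \<in> E. old_edge v e \<in> M'}" for M'
definition Phi where "Phi M = old_edge v ` M \<union> {Inr ` {y \<in> N. {v, y} \<notin> M}}" for M
definition Psi where "Psi J = old_edge v ` J" for J

lemma spokeE: "y \<in> N \<Longrightarrow> {v, y} \<in> E" using nbr_iff by simp
lemma Nne: "y \<in> N \<Longrightarrow> y \<noteq> v \<and> y \<in> V" using nbr_ne by blast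
lemma cN3: "card N = 3" using card_nbr[OF vV] .

lemma two_of_N:
  assumes "x \<in> N"
  shows "\<exists>y z. N - {x} = {y, z} \<and> y \<noteq> z"
proof -
  have "card (N - {x}) = 2" using cN3 assms nbr_fin by (simp add: card_Diff_singleton)
  then show ?thesis by (metis card_2_iff)
qed

lemma Phi_tri:
  assumes pm: "perfect_matching V E M" and x: "{v, x} \<in> M"
  shows "Inr ` {y \<in> N. {v, y} \<notin> M} = Inr ` (N - {x})" "Inr ` (N - {x}) \<in> tris" "x \<in> N"
proof -
  show xN: "x \<in> N" using x pm_sub[OF pm] nbr_iff by blast
  have "{y \<in> N. {v, y} \<notin> M} = N - {x}"
  proof
    show "{y \<in> N. {v, y} \<notin> M} \<subseteq> N - {x}" using x by auto
    show "N - {x} \<subseteq> {y \<in> N. {v, y} \<notin> M}"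
    proof
      fix y assume y: "y \<in> N - {x}"
      have "{v, y} \<notin> M"
      proof
        assume "{v, y} \<in> M"
        then have "{v, y} = {v, x}" using pm_unique[OF pm vV _ _ x] by simp
        then show False using y by (metis Diff_iff doubleton_eq_iff singletonI)
      qed
      then show "y \<in> {y \<in> N. {v, y} \<notin> M}" using y by simp
    qed
  qed
  then show "Inr ` {y \<in> N. {v, y} \<notin> M} = Inr ` (N - {x})" by simp
  obtain y z where yz: "N - {x} = {y, z}" "y \<noteq> z" using two_of_N[OF xN] by blast
  then have "y \<in> N" "z \<in> N" by auto
  then show "Inr ` (N - {x}) \<in> tris" unfolding tris_def yz(1) using yz(2) by auto
qed

lemma Phi_pm:
  assumes pm: "perfect_matching V E M"
  shows "perfect_matching V' E' (Phi M)"
proof -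
  obtain x where x: "{v, x} \<in> M"
  proof -
    obtain e where e: "e \<in> M" "v \<in> e" using pm_ex[OF pm vV] by blast
    then have "e \<in> E" using pm_sub[OF pm] by blast
    then obtain y where "e = {v, y}" using edge_form e(2) by blast
    then show ?thesis using that e by blast
  qed
  note pt = Phi_tri[OF pm x]
  define f :: "('a + 'a) set" where "f = Inr ` (N - {x})"
  have PhiM: "Phi M = old_edge v ` M \<union> {f}" unfolding Phi_def f_def pt(1) ..
  have ME: "M \<subseteq> E" using pm_sub[OF pm] .
  show ?thesis
    unfolding perfect_matching_def
  proof (intro conjI ballI)
    show "Phi M \<subseteq> E'" unfolding PhiM E'_def2 using ME pt(2) f_def by blast
    fix w assume w: "w \<in> V'"
    show "\<exists>!e. e \<in> Phi M \<and> w \<in> e"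
    proof (cases w)
      case (Inl u)
      then have u: "u \<in> V" "u \<noteq> v" using w V'_iff by auto
      obtain e0 where e0: "e0 \<in> M" "u \<in> e0" using pm_ex[OF pm u(1)] by blast
      show ?thesis
      proof (rule ex1I[of _ "old_edge v e0"])
        show "old_edge v e0 \<in> Phi M \<and> w \<in> old_edge v e0"
          unfolding PhiM Inl using e0 old_Inl ME u by blast
        fix e' assume e': "e' \<in> Phi M \<and> w \<in> e'"
        then have "e' \<noteq> f" unfolding Inl f_def by auto
        then obtain e where e: "e \<in> M" "e' = old_edge v e" using e' unfolding PhiM by blast
        then have "u \<in> e" using e' old_Inl ME unfolding Inl by blast
        then have "e = e0" using pm_unique[OF pm u(1) e(1) _ e0] by simp
        then show "e' = old_edge v e0" using e by simp
      qed
    next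
      case (Inr y)
      then have yN: "y \<in> N" using w V'_iff by auto
      show ?thesis
      proof (cases "y = x")
        case True
        show ?thesis
        proof (rule ex1I[of _ "old_edge v {v, x}"])
          show "old_edge v {v, x} \<in> Phi M \<and> w \<in> old_edge v {v, x}"
            unfolding PhiM Inr True using x oe_v[of x v] Nne[OF pt(3)] by auto
          fix e' assume e': "e' \<in> Phi M \<and> w \<in> e'"
          then have "e' \<noteq> f" unfolding Inr f_def True by auto
          then obtain e where e: "e \<in> M" "e' = old_edge v e" using e' unfolding PhiM by blast
          then have "e = {v, y}" using e' old_Inr ME unfolding Inr by blast
          then show "e' = old_edge v {v, x}" using e True by simp
        qed
      next
        case False
        show ?thesis
        proof (rule ex1I[of _ f])
          show "f \<in> Phi M \<and> w \<in> f" unfolding PhiM Inr f_def using yN False by auto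
          fix e' assume e': "e' \<in> Phi M \<and> w \<in> e'"
          show "e' = f"
          proof (rule ccontr)
            assume "e' \<noteq> f"
            then obtain e where e: "e \<in> M" "e' = old_edge v e" using e' unfolding PhiM by blast
            then have "e = {v, y}" using e' old_Inr ME unfolding Inr by blast
            then have "{v, y} = {v, x}" using pm_unique[OF pm vV _ _ x] e by simp
            then show False using False by (metis doubleton_eq_iff)
          qed
        qed
      qed
    qed
  qed
qed

lemma join_spokes:
  assumes J: "vjoin V E v J" and yN: "y \<in> N"
  shows "{v, y} \<in> J"
proof -
  have JE: "J \<subseteq> E" using J unfolding vjoin_def by simp
  have sub: "{e \<in> J. v \<in> e} \<subseteq> {e \<in> E. v \<in> e}" using JE by blast
  have "card {e \<in> J. v \<in> e} = 3" using J unfolding vjoin_def degree_def by simp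
  moreover have "card {e \<in> E. v \<in> e} = 3" using deg3[OF vV] unfolding degree_def .
  moreover have "finite {e \<in> E. v \<in> e}" using finE by simp
  ultimately have "{e \<in> J. v \<in> e} = {e \<in> E. v \<in> e}" using card_subset_eq sub by metis
  then show ?thesis using spokeE[OF yN] by blast
qed

lemma join_uniq:
  assumes J: "vjoin V E v J" and u: "u \<in> V" "u \<noteq> v"
  shows "\<exists>!e. e \<in> J \<and> u \<in> e"
proof -
  have "card {e \<in> J. u \<in> e} = 1" using J u unfolding vjoin_def degree_def by simp
  then obtain e0 where "{e \<in> J. u \<in> e} = {e0}" by (rule card_1_singletonE)
  then show ?thesis by (metis (mono_tags, lifting) mem_Collect_eq singleton_iff)
qed

lemma Psi_pm:
  assumes J: "vjoin V E v J"
  shows "perfect_matching V' E' (Psi J)"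
proof -
  have JE: "J \<subseteq> E" using J unfolding vjoin_def by simp
  show ?thesis
    unfolding perfect_matching_def
  proof (intro conjI ballI)
    show "Psi J \<subseteq> E'" unfolding Psi_def E'_def2 using JE by blast
    fix w assume w: "w \<in> V'"
    show "\<exists>!e. e \<in> Psi J \<and> w \<in> e"
    proof (cases w)
      case (Inl u)
      then have u: "u \<in> V" "u \<noteq> v" using w V'_iff by auto
      have ex: "\<exists>!e. e \<in> J \<and> u \<in> e" by (rule join_uniq[OF J u])
      then obtain e0 where e0: "e0 \<in> J" "u \<in> e0" by blast
      show ?thesis
      proof (rule ex1I[of _ "old_edge v e0"])
        show "old_edge v e0 \<in> Psi J \<and> w \<in> old_edge v e0"
          unfolding Psi_def Inl using e0 old_Inl JE u by blast
        fix e' assume e': "e' \<in> Psi J \<and> w \<in> e'"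
        then obtain e where e: "e \<in> J" "e' = old_edge v e" unfolding Psi_def by blast
        then have "u \<in> e" using e' old_Inl JE unfolding Inl by blast
        then have "e = e0" using ex e0 e by blast
        then show "e' = old_edge v e0" using e by simp
      qed
    next
      case (Inr y)
      then have yN: "y \<in> N" using w V'_iff by auto
      show ?thesis
      proof (rule ex1I[of _ "old_edge v {v, y}"])
        show "old_edge v {v, y} \<in> Psi J \<and> w \<in> old_edge v {v, y}"
          unfolding Psi_def Inr using join_spokes[OF J yN] oe_v[of y v] Nne[OF yN] by auto
        fix e' assume e': "e' \<in> Psi J \<and> w \<in> e'"
        then obtain e where e: "e \<in> J" "e' = old_edge v e" unfolding Psi_def by blast
        then have "e = {v, y}" using e' old_Inr JE unfolding Inr by blast
        then show "e' = old_edge v {v, y}" using e by simp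
      qed
    qed
  qed
qed

end


context tri begin

lemma N_eq3:
  assumes "y \<in> N" "z \<in> N" "w \<in> N" "y \<noteq> z" "y \<noteq> w" "z \<noteq> w"
  shows "N = {y, z, w}"
proof -
  have sub: "{y, z, w} \<subseteq> N" using assms by simp
  have "card {y, z, w} = 3" using assms by simp
  then show ?thesis using card_subset_eq[OF nbr_fin sub] cN3 by simp
qed

lemma classify:
  assumes pm': "perfect_matching V' E' M'"
  shows "(perfect_matching V E (Bk M') \<and> M' = Phi (Bk M')) \<or> (vjoin V E v (Bk M') \<and> M' = Psi (Bk M'))"
proof -
  define B where "B = Bk M'"
  have BE: "B \<subseteq> E" unfolding B_def Bk_def by blast
  have inB: "e \<in> B \<longleftrightarrow> e \<in> E \<and> old_edge v e \<in> M'" for e unfolding B_def Bk_def by simp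
  have M'E: "M' \<subseteq> E'" using pm' unfolding perfect_matching_def by simp
  have uq: "e1 = e2" if "w \<in> V'" "e1 \<in> M'" "w \<in> e1" "e2 \<in> M'" "w \<in> e2" for w e1 e2
    using pm_unique[OF pm' that] .
  have split: "(\<exists>e\<in>B. e' = old_edge v e) \<or> e' \<in> tris" if "e' \<in> M'" for e'
  proof -
    have "e' \<in> old_edge v ` E \<or> e' \<in> tris" using M'E that unfolding E'_def2 by blast
    then show ?thesis using that inB by blast
  qed
  have bu: "\<exists>!e. e \<in> B \<and> u \<in> e" if u: "u \<in> V" "u \<noteq> v" for u
  proof -
    have w: "Inl u \<in> V'" using V'_iff u by simp
    obtain e' where e': "e' \<in> M'" "Inl u \<in> e'" using pm_ex[OF pm' w] by blast
    have "e' \<notin> tris"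
    proof
      assume "e' \<in> tris"
      from tri_noInl[OF this] e'(2) show False by simp
    qed
    then obtain e where e: "e \<in> B" "e' = old_edge v e" using split[OF e'(1)] by blast
    have ue: "u \<in> e" using e e' old_Inl BE by blast
    show ?thesis
    proof (rule ex1I[of _ e])
      show "e \<in> B \<and> u \<in> e" using e ue by simp
      fix e2 assume e2: "e2 \<in> B \<and> u \<in> e2"
      then have "Inl u \<in> old_edge v e2" using old_Inl BE u by blast
      then have "old_edge v e2 = e'" using uq[OF w _ _ e'] e2 inB by blast
      then show "e2 = e" using old_inj BE e e2 by blast
    qed
  qed
  have cov: "{v, y} \<in> B \<or> (\<exists>z\<in>N. z \<noteq> y \<and> {Inr y, Inr z} \<in> M')" if yN: "y \<in> N" for y
  proof -
    have w: "Inr y \<in> V'" using V'_iff yN by simp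
    obtain e' where e': "e' \<in> M'" "Inr y \<in> e'" using pm_ex[OF pm' w] by blast
    show ?thesis
    proof (cases "e' \<in> tris")
      case True
      then obtain a b where ab: "e' = {Inr a, Inr b}" "a \<in> N" "b \<in> N" "a \<noteq> b" unfolding tris_def by blast
      then have "y = a \<or> y = b" using e' by auto
      then show ?thesis using ab e' by (metis insert_commute)
    next
      case False
      then obtain e where e: "e \<in> B" "e' = old_edge v e" using split[OF e'(1)] by blast
      then have "e = {v, y}" using old_Inr BE e' by blast
      then show ?thesis using e by simp
    qed
  qed
  have o1: False if "{v, a} \<in> B" "{Inr a, Inr b} \<in> M'" "a \<in> N" for a b
  proof -
    have w: "Inr a \<in> V'" using V'_iff that(3) by simp
    have "old_edge v {v, a} = {Inr a, Inl a}" using oe_v[of a v] Nne[OF that(3)] by simp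
    then have "old_edge v {v, a} \<in> M'" "Inr a \<in> old_edge v {v, a}" using that inB by auto
    then have "old_edge v {v, a} = {Inr a, Inr b}" using uq[OF w] that(2) by blast
    then show False using \<open>old_edge v {v, a} = {Inr a, Inl a}\<close> by (metis insertCI insertE sum.distinct(1) singletonD)
  qed
  have o2: "{Inr a, Inr b} = {Inr c, Inr d}" if "{Inr a, Inr b} \<in> M'" "{Inr c, Inr d} \<in> M'" "t \<in> {a, b}" "t \<in> {c, d}" "t \<in> N" for a b c d t
  proof -
    have w: "Inr t \<in> V'" using V'_iff that(5) by simp
    show ?thesis using uq[OF w that(1) _ that(2)] that(3,4) by auto
  qed
  show ?thesis
  proof (cases "\<forall>y\<in>N. {v, y} \<in> B")
    case allsp: True
    have vE: "{e \<in> B. v \<in> e} = {e \<in> E. v \<in> e}"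
    proof
      show "{e \<in> B. v \<in> e} \<subseteq> {e \<in> E. v \<in> e}" using BE by blast
      show "{e \<in> E. v \<in> e} \<subseteq> {e \<in> B. v \<in> e}"
      proof
        fix e assume e: "e \<in> {e \<in> E. v \<in> e}"
        then have "e \<in> (\<lambda>y. {v, y}) ` N" using vedges by blast
        then show "e \<in> {e \<in> B. v \<in> e}" using allsp by auto
      qed
    qed
    have vj: "vjoin V E v B"
      unfolding vjoin_def
    proof (intro conjI ballI)
      show "B \<subseteq> E" by (rule BE)
      show "degree B v = 3" unfolding degree_def vE using deg3[OF vV] unfolding degree_def .
      fix u assume u: "u \<in> V - {v}"
      then have ex: "\<exists>!e. e \<in> B \<and> u \<in> e" using bu by blast
      then obtain e0 where e0: "e0 \<in> B" "u \<in> e0" by blast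
      have "{e \<in> B. u \<in> e} = {e0}" using ex e0 by blast
      then show "degree B u = 1" unfolding degree_def by simp
    qed
    have "M' = Psi B"
    proof
      show "Psi B \<subseteq> M'" unfolding Psi_def using inB by blast
      show "M' \<subseteq> Psi B"
      proof
        fix e' assume e': "e' \<in> M'"
        show "e' \<in> Psi B"
        proof (cases "e' \<in> tris")
          case True
          then obtain a b where ab: "e' = {Inr a, Inr b}" "a \<in> N" unfolding tris_def by blast
          then show ?thesis using o1[of a b] allsp e' by auto
        next
          case False
          then show ?thesis using split[OF e'] unfolding Psi_def by blast
        qed
      qed
    qed
    then show ?thesis using vj unfolding B_def by blast
  next
    case False
    then obtain y where y: "y \<in> N" "{v, y} \<notin> B" by blast
    then obtain z where z: "z \<in> N" "z \<noteq> y" "{Inr y, Inr z} \<in> M'" using cov by blast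
    have zB: "{v, z} \<notin> B" using o1[of z y] z by (metis insert_commute)
    obtain w where w: "w \<in> N" "w \<noteq> y" "w \<noteq> z"
    proof -
      have "card {y, z} = 2" using z by simp
      have "N - {y, z} \<noteq> {}"
      proof
        assume "N - {y, z} = {}"
        then have "N \<subseteq> {y, z}" by blast
        then have "card N \<le> card {y, z}" by (intro card_mono) simp_all
        then show False using cN3 \<open>card {y, z} = 2\<close> by simp
      qed
      then show ?thesis using that by blast
    qed
    have Neq: "N = {y, z, w}" using N_eq3[OF y(1) z(1) w(1)] z(2) w by auto
    have wB: "{v, w} \<in> B"
    proof (rule ccontr)
      assume "{v, w} \<notin> B"
      then obtain t where t: "t \<in> N" "t \<noteq> w" "{Inr w, Inr t} \<in> M'" using cov[OF w(1)] by blast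
      then have "t = y \<or> t = z" using Neq by auto
      then have "{Inr w, Inr t} = {Inr y, Inr z}" using o2[OF t(3) z(3), of t] t(1) by auto
      then show False using w by (metis doubleton_eq_iff sum.inject(2))
    qed
    have pmB: "perfect_matching V E B"
      unfolding perfect_matching_def
    proof (intro conjI ballI)
      show "B \<subseteq> E" by (rule BE)
      fix u assume u: "u \<in> V"
      show "\<exists>!e. e \<in> B \<and> u \<in> e"
      proof (cases "u = v")
        case False then show ?thesis using bu u by blast
      next
        case True
        show ?thesis
        proof (rule ex1I[of _ "{v, w}"])
          show "{v, w} \<in> B \<and> u \<in> {v, w}" using wB True by simp
          fix e assume e: "e \<in> B \<and> u \<in> e"
          then have "e \<in> (\<lambda>y. {v, y}) ` N" using vedges BE True by blast
          then obtain t where t: "t \<in> N" "e = {v, t}" by blast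
          then have "t = w" using e y(2) zB Neq by auto
          then show "e = {v, w}" using t by simp
        qed
      qed
    qed
    have tset: "{t \<in> N. {v, t} \<notin> B} = {y, z}" using Neq y(2) zB wB by auto
    have "M' = Phi B"
    proof
      show "Phi B \<subseteq> M'" unfolding Phi_def tset using inB z(3) by auto
      show "M' \<subseteq> Phi B"
      proof
        fix e' assume e': "e' \<in> M'"
        show "e' \<in> Phi B"
        proof (cases "e' \<in> tris")
          case True
          then obtain a b where ab: "e' = {Inr a, Inr b}" "a \<in> N" "b \<in> N" "a \<noteq> b" unfolding tris_def by blast
          have "a \<noteq> w" using o1[of a b] ab wB e' by auto
          then have "a = y \<or> a = z" using ab Neq by auto
          then have "e' = {Inr y, Inr z}" using o2[OF _ z(3), of a b a] e' ab by auto
          then show ?thesis unfolding Phi_def tset by simp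
        next
          case False
          then show ?thesis using split[OF e'] unfolding Phi_def by blast
        qed
      qed
    qed
    then show ?thesis using pmB unfolding B_def by blast
  qed
qed

end


context tri begin

lemma pm_partner: "perfect_matching V E M \<Longrightarrow> \<exists>x. {v, x} \<in> M"
proof -
  assume pm: "perfect_matching V E M"
  obtain e where e: "e \<in> M" "v \<in> e" using pm_ex[OF pm vV] by blast
  then have "e \<in> E" using pm_sub[OF pm] by blast
  then obtain y where "e = {v, y}" using edge_form e(2) by blast
  then show ?thesis using e by blast
qed

lemma Phi_form: "perfect_matching V E M \<Longrightarrow> {v, x} \<in> M \<Longrightarrow> Phi M = old_edge v ` M \<union> {Inr ` (N - {x})}"
proof -
  assume a: "perfect_matching V E M" "{v, x} \<in> M"
  show ?thesis unfolding Phi_def Phi_tri(1)[OF a] ..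
qed

lemma Bk_Phi: "perfect_matching V E M \<Longrightarrow> Bk (Phi M) = M"
proof -
  assume pm: "perfect_matching V E M"
  obtain x where x: "{v, x} \<in> M" using pm_partner[OF pm] by blast
  have ME: "M \<subseteq> E" using pm_sub[OF pm] .
  have ft: "Inr ` (N - {x}) \<in> tris" using Phi_tri(2)[OF pm x] .
  show ?thesis
  proof
    show "Bk (Phi M) \<subseteq> M"
    proof
      fix e assume "e \<in> Bk (Phi M)"
      then have e: "e \<in> E" "old_edge v e \<in> Phi M" unfolding Bk_def by auto
      have "old_edge v e \<noteq> Inr ` (N - {x})" using old_not_tri[OF e(1)] ft by metis
      then have "old_edge v e \<in> old_edge v ` M" using e(2) unfolding Phi_form[OF pm x] by blast
      then obtain e' where "e' \<in> M" "old_edge v e = old_edge v e'" by blast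
      then show "e \<in> M" using old_inj[OF e(1)] ME by blast
    qed
    show "M \<subseteq> Bk (Phi M)" unfolding Bk_def Phi_def using ME by blast
  qed
qed

lemma Bk_Psi: "J \<subseteq> E \<Longrightarrow> Bk (Psi J) = J"
proof -
  assume JE: "J \<subseteq> E"
  show ?thesis
  proof
    show "Bk (Psi J) \<subseteq> J"
    proof
      fix e assume "e \<in> Bk (Psi J)"
      then have e: "e \<in> E" "old_edge v e \<in> old_edge v ` J" unfolding Bk_def Psi_def by auto
      then obtain e' where "e' \<in> J" "old_edge v e = old_edge v e'" by blast
      then show "e \<in> J" using old_inj[OF e(1)] JE by blast
    qed
    show "J \<subseteq> Bk (Psi J)" unfolding Bk_def Psi_def using JE by blast
  qed
qed

lemma Phi_ne_Psi: "perfect_matching V E M \<Longrightarrow> J \<subseteq> E \<Longrightarrow> Phi M \<noteq> Psi J"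
proof
  assume pm: "perfect_matching V E M" and JE: "J \<subseteq> E" and eq: "Phi M = Psi J"
  obtain x where x: "{v, x} \<in> M" using pm_partner[OF pm] by blast
  have "Inr ` (N - {x}) \<in> Psi J" using eq unfolding Phi_form[OF pm x] by auto
  then obtain e where e: "e \<in> J" "Inr ` (N - {x}) = old_edge v e" unfolding Psi_def by blast
  have "e \<in> E" using e(1) JE by blast
  from old_not_tri[OF this] Phi_tri(2)[OF pm x] e(2) show False by metis
qed

lemma finPM: "finite {M. perfect_matching V E M \<and> P M}"
proof (rule finite_subset)
  show "{M. perfect_matching V E M \<and> P M} \<subseteq> Pow E" using pm_sub by blast
  show "finite (Pow E)" using finE by simp
qed

lemma finJ: "finite {J. vjoin V E v J \<and> P J}"
proof (rule finite_subset)
  show "{J. vjoin V E v J \<and> P J} \<subseteq> Pow E" unfolding vjoin_def by blast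
  show "finite (Pow E)" using finE by simp
qed

lemma count_old:
  assumes e: "e \<in> E"
  shows "card {M'. perfect_matching V' E' M' \<and> old_edge v e \<in> M'}
       = card {M. perfect_matching V E M \<and> e \<in> M} + card {J. vjoin V E v J \<and> e \<in> J}"
proof -
  define A where "A = {M. perfect_matching V E M \<and> e \<in> M}"
  define B where "B = {J. vjoin V E v J \<and> e \<in> J}"
  have eq: "{M'. perfect_matching V' E' M' \<and> old_edge v e \<in> M'} = Phi ` A \<union> Psi ` B"
  proof
    show "{M'. perfect_matching V' E' M' \<and> old_edge v e \<in> M'} \<subseteq> Phi ` A \<union> Psi ` B"
    proof
      fix M' assume M': "M' \<in> {M'. perfect_matching V' E' M' \<and> old_edge v e \<in> M'}"
      then have pm': "perfect_matching V' E' M'" and oe: "old_edge v e \<in> M'" by auto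
      have eB: "e \<in> Bk M'" unfolding Bk_def using e oe by simp
      from classify[OF pm'] show "M' \<in> Phi ` A \<union> Psi ` B"
      proof
        assume "perfect_matching V E (Bk M') \<and> M' = Phi (Bk M')"
        then show ?thesis unfolding A_def using eB by blast
      next
        assume "vjoin V E v (Bk M') \<and> M' = Psi (Bk M')"
        then show ?thesis unfolding B_def using eB by blast
      qed
    qed
    show "Phi ` A \<union> Psi ` B \<subseteq> {M'. perfect_matching V' E' M' \<and> old_edge v e \<in> M'}"
    proof
      fix M' assume "M' \<in> Phi ` A \<union> Psi ` B"
      then consider (a) M where "M \<in> A" "M' = Phi M" | (b) J where "J \<in> B" "M' = Psi J" by blast
      then show "M' \<in> {M'. perfect_matching V' E' M' \<and> old_edge v e \<in> M'}"
      proof cases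
        case a
        then show ?thesis using Phi_pm unfolding A_def Phi_def by auto
      next
        case b
        then show ?thesis using Psi_pm unfolding B_def Psi_def by auto
      qed
    qed
  qed
  have finA: "finite A" unfolding A_def by (rule finPM)
  have finB: "finite B" unfolding B_def by (rule finJ)
  have injA: "inj_on Phi A" by (rule inj_onI) (metis (mono_tags, lifting) A_def Bk_Phi mem_Collect_eq)
  have injB: "inj_on Psi B"
  proof (rule inj_onI)
    fix J1 J2 assume "J1 \<in> B" "J2 \<in> B" "Psi J1 = Psi J2"
    then show "J1 = J2" using Bk_Psi unfolding B_def vjoin_def by (metis (mono_tags, lifting) mem_Collect_eq)
  qed
  have dis: "Phi ` A \<inter> Psi ` B = {}"
    using Phi_ne_Psi unfolding A_def B_def vjoin_def by blast
  have "card (Phi ` A \<union> Psi ` B) = card (Phi ` A) + card (Psi ` B)"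
    using card_Un_disjoint[OF finite_imageI[OF finA] finite_imageI[OF finB] dis] .
  then show ?thesis unfolding eq A_def[symmetric] B_def[symmetric]
    using card_image[OF injA] card_image[OF injB] by simp
qed

lemma count_tri:
  assumes x: "x \<in> N"
  shows "card {M'. perfect_matching V' E' M' \<and> Inr ` (N - {x}) \<in> M'}
       = card {M. perfect_matching V E M \<and> {v, x} \<in> M}"
proof -
  define A where "A = {M. perfect_matching V E M \<and> {v, x} \<in> M}"
  define f :: "('a + 'a) set" where "f = Inr ` (N - {x})"
  have ftri: "f \<in> tris"
  proof -
    obtain y z where yz: "N - {x} = {y, z}" "y \<noteq> z" using two_of_N[OF x] by blast
    then have "y \<in> N" "z \<in> N" by auto
    then show ?thesis unfolding tris_def f_def yz(1) using yz(2) by auto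
  qed
  have eq: "{M'. perfect_matching V' E' M' \<and> f \<in> M'} = Phi ` A"
  proof
    show "{M'. perfect_matching V' E' M' \<and> f \<in> M'} \<subseteq> Phi ` A"
    proof
      fix M' assume M': "M' \<in> {M'. perfect_matching V' E' M' \<and> f \<in> M'}"
      then have pm': "perfect_matching V' E' M'" and fM: "f \<in> M'" by auto
      from classify[OF pm'] show "M' \<in> Phi ` A"
      proof
        assume h: "perfect_matching V E (Bk M') \<and> M' = Phi (Bk M')"
        obtain x0 where x0: "{v, x0} \<in> Bk M'" using pm_partner h by blast
        have x0N: "x0 \<in> N" using Phi_tri(3) h x0 by blast
        have "f \<in> old_edge v ` Bk M' \<union> {Inr ` (N - {x0})}" using fM h Phi_form x0 by metis
        moreover have "f \<notin> old_edge v ` Bk M'" using ftri old_not_tri unfolding Bk_def by blast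
        ultimately have "Inr ` (N - {x}) = Inr ` (N - {x0})" unfolding f_def by blast
        then have "N - {x} = N - {x0}" by (simp add: inj_image_eq_iff)
        then have "x = x0" using x x0N by blast
        then show ?thesis unfolding A_def using h x0 by blast
      next
        assume h: "vjoin V E v (Bk M') \<and> M' = Psi (Bk M')"
        have "Bk M' \<subseteq> E" unfolding Bk_def by blast
        then have "f \<notin> Psi (Bk M')" unfolding Psi_def using ftri old_not_tri by blast
        then show ?thesis using h fM by simp
      qed
    qed
    show "Phi ` A \<subseteq> {M'. perfect_matching V' E' M' \<and> f \<in> M'}"
    proof
      fix M' assume "M' \<in> Phi ` A"
      then obtain M where M: "perfect_matching V E M" "{v, x} \<in> M" "M' = Phi M" unfolding A_def by blast
      then show "M' \<in> {M'. perfect_matching V' E' M' \<and> f \<in> M'}"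
        using Phi_pm[OF M(1)] Phi_form[OF M(1,2)] unfolding f_def by simp
    qed
  qed
  have injA: "inj_on Phi A" by (rule inj_onI) (metis (mono_tags, lifting) A_def Bk_Phi mem_Collect_eq)
  show ?thesis using eq card_image[OF injA] unfolding f_def A_def by simp
qed

end

theorem mainTheorem7:
  fixes V :: "'a set" and E :: "'a set set" and v :: 'a
  assumes "classU V E" and "v \<in> V"
  shows
    "(\<forall>e\<in>E. lonely (tri_vertices V E v) (tri_edges V E v) (old_edge v e) \<longleftrightarrow>
              lonely V E e \<and> \<not> (\<exists>J. vjoin V E v J \<and> e \<in> J))
     \<and> (\<forall>x y z. x \<in> neighbours E v \<and> y \<in> neighbours E v \<and> z \<in> neighbours E v \<and>
              x \<noteq> y \<and> y \<noteq> z \<and> x \<noteq> z \<longrightarrow>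
         \<not> lonely (tri_vertices V E v) (tri_edges V E v) (old_edge v {v, x})
         \<and> (lonely (tri_vertices V E v) (tri_edges V E v) {Inr y, Inr z} \<longleftrightarrow>
            lonely V E {v, x}))"
proof -
  interpret tri V E v using assms unfolding classU_def by unfold_locales auto
  have part1: "lonely V' E' (old_edge v e) \<longleftrightarrow> lonely V E e \<and> \<not> (\<exists>J. vjoin V E v J \<and> e \<in> J)"
    if e: "e \<in> E" for e
  proof -
    have oe: "old_edge v e \<in> E'" unfolding E'_def2 using e by blast
    obtain a b where ab: "e = {a, b}" using graph_edge[OF g e] by blast
    obtain M where "perfect_matching V E M" "e \<in> M" using pm_edge e ab by blast
    then have "{M. perfect_matching V E M \<and> e \<in> M} \<noteq> {}" by blast
    then have ge1: "card {M. perfect_matching V E M \<and> e \<in> M} \<ge> 1"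
      using finPM[of "\<lambda>M. e \<in> M"] by (simp add: Suc_leI card_gt_0_iff)
    have cJ: "card {J. vjoin V E v J \<and> e \<in> J} = 0 \<longleftrightarrow> \<not> (\<exists>J. vjoin V E v J \<and> e \<in> J)"
      using finJ[of "\<lambda>J. e \<in> J"] by simp
    show ?thesis unfolding lonely_def using count_old[OF e] oe e ge1 cJ by auto
  qed
  have part2: "\<not> lonely V' E' (old_edge v {v, x}) \<and> (lonely V' E' {Inr y, Inr z} \<longleftrightarrow> lonely V E {v, x})"
    if xyz: "x \<in> N" "y \<in> N" "z \<in> N" "x \<noteq> y" "y \<noteq> z" "x \<noteq> z" for x y z
  proof -
    have vxE: "{v, x} \<in> E" using spokeE[OF xyz(1)] .
    define A where "A = {M. perfect_matching V E M \<and> {v, x} \<in> M}"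
    define B where "B = {J. vjoin V E v J \<and> {v, x} \<in> J}"
    have finA: "finite A" unfolding A_def by (rule finPM)
    have finB: "finite B" unfolding B_def by (rule finJ)
    obtain M where M: "perfect_matching V E M" "{v, x} \<in> M" using pm_edge[OF vxE] by blast
    have "M \<in> A" unfolding A_def using M by blast
    then have cA: "card A \<ge> 1" using finA by (metis One_nat_def Suc_leI card_gt_0_iff empty_iff)
    have "card A + card B \<ge> 2"
    proof (cases "\<exists>J. vjoin V E v J")
      case True
      then obtain J where J: "vjoin V E v J" by blast
      then have "J \<in> B" unfolding B_def using join_spokes[OF J xyz(1)] by blast
      then have "card B \<ge> 1" using finB by (metis One_nat_def Suc_leI card_gt_0_iff empty_iff)
      then show ?thesis using cA by simp
    next
      case False
      obtain M1 M2 where M12: "perfect_matching V E M1" "perfect_matching V E M2"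
        "{v, x} \<in> M1" "{v, x} \<in> M2" "M1 \<noteq> M2" using F2[OF vV xyz(1) False] by blast
      have "{M1, M2} \<subseteq> A" unfolding A_def using M12 by blast
      then have "card {M1, M2} \<le> card A" using finA by (rule card_mono[rotated])
      then show ?thesis using M12(5) by simp
    qed
    then have nl: "\<not> lonely V' E' (old_edge v {v, x})"
      unfolding lonely_def using count_old[OF vxE] unfolding A_def B_def by simp
    have Nx: "N - {x} = {y, z}"
    proof -
      have "N = {x, y, z}" using N_eq3[OF xyz(1,2,3)] xyz(4,5,6) by blast
      then show ?thesis using xyz by auto
    qed
    have fE: "{Inr y, Inr z} \<in> E'" unfolding E'_def2 tris_def using xyz by blast
    have "lonely V' E' {Inr y, Inr z} \<longleftrightarrow> lonely V E {v, x}"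
      unfolding lonely_def using count_tri[OF xyz(1)] fE vxE unfolding Nx by simp
    then show ?thesis using nl by simp
  qed
  show ?thesis using part1 part2 by blast
qed


end
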